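(* Let $r>0$, assume $W$ satisfies (H), and let $R>2r+1$. Then the minimization problem $$\inf\Big\{\mathcal{E}_{(-R,R)}(u)\ :\ u\in L^\infty(\mathbb{R}),\ u=1\text{ a.e. on }[R-r,\infty),\ u=-1\text{ a.e. on }(-\infty,-R+r]\Big\}$$ admits a minimizer $u_R$ which is monotone nondecreasing, and $\mathcal{E}_{(-R,R)}(u_R)\le\min\{4/r,\,4+c_W\}$.
   Context: For an interval $I$, $\operatorname{osc}_I u:=\operatorname{ess\,sup}_I u-\operatorname{ess\,inf}_I u$. $\mathcal{E}_{(a,b)}(u):=\frac1{2r^2}\int_a^b(\operatorname{osc}_{(x-r,x+r)}u)^2dx+\int_a^bW(u(x))dx$. Assumption (H): $W\in C(\mathbb{R})$, $W(\pm1)=0<W(t)$ for $t\ne\pm1$; $W$ strictly decreasing on $(-\infty,-1)$, strictly increasing on $(1,\infty)$; $W$ even on $[-1,1]$ with unique local maximum in $[-1,1]$ at $0$. $c_W:=\int_{-1}^1W(s)ds$. *)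

theory Defs
  imports "HOL-Analysis.Analysis" "HOL-Probability.Essential_Supremum"
begin

definition ess_sup_on :: "real \<Rightarrow> real \<Rightarrow> (real \<Rightarrow> real) \<Rightarrow> ereal" where
  "ess_sup_on a b u = esssup (restrict_space lborel {a<..<b}) (\<lambda>y. ereal (u y))"

definition ess_inf_on :: "real \<Rightarrow> real \<Rightarrow> (real \<Rightarrow> real) \<Rightarrow> ereal" where
  "ess_inf_on a b u = - esssup (restrict_space lborel {a<..<b}) (\<lambda>y. - ereal (u y))"

text \<open>Oscillation of u over (a,b) (finite for essentially bounded u).\<close>
definition osc_on :: "real \<Rightarrow> real \<Rightarrow> (real \<Rightarrow> real) \<Rightarrow> real" where
  "osc_on a b u = real_of_ereal (ess_sup_on a b u - ess_inf_on a b u)"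

definition energy :: "real \<Rightarrow> (real \<Rightarrow> real) \<Rightarrow> real \<Rightarrow> real \<Rightarrow> (real \<Rightarrow> real) \<Rightarrow> real" where
  "energy r W a b u =
     1 / (2 * r\<^sup>2) * (LINT x:{a<..<b}|lborel. (osc_on (x - r) (x + r) u)\<^sup>2)
     + (LINT x:{a<..<b}|lborel. W (u x))"

definition Linf :: "(real \<Rightarrow> real) set" where
  "Linf = {u. u \<in> borel_measurable lborel \<and> (\<exists>C. AE x in lborel. \<bar>u x\<bar> \<le> C)}"

definition admissible :: "real \<Rightarrow> real \<Rightarrow> (real \<Rightarrow> real) \<Rightarrow> bool" where
  "admissible r R u \<longleftrightarrow> u \<in> Linf
     \<and> (AE x in lborel. x \<ge> R - r \<longrightarrow> u x = 1)
     \<and> (AE x in lborel. x \<le> - R + r \<longrightarrow> u x = -1)"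

definition loc_max_on_unit :: "(real \<Rightarrow> real) \<Rightarrow> real \<Rightarrow> bool" where
  "loc_max_on_unit W t \<longleftrightarrow> t \<in> {-1..1} \<and>
     (\<exists>e>0. \<forall>s\<in>{-1..1}. \<bar>s - t\<bar> < e \<longrightarrow> W s \<le> W t)"

definition hyp_H :: "(real \<Rightarrow> real) \<Rightarrow> bool" where
  "hyp_H W \<longleftrightarrow> continuous_on UNIV W
     \<and> W 1 = 0 \<and> W (-1) = 0 \<and> (\<forall>t. t \<noteq> 1 \<and> t \<noteq> -1 \<longrightarrow> W t > 0)
     \<and> (\<forall>s t. s < t \<and> t < -1 \<longrightarrow> W t < W s)
     \<and> (\<forall>s t. 1 < s \<and> s < t \<longrightarrow> W s < W t)
     \<and> (\<forall>t\<in>{-1..1}. W (-t) = W t)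
     \<and> (\<forall>t. loc_max_on_unit W t \<longleftrightarrow> t = 0)"

definition c_W :: "(real \<Rightarrow> real) \<Rightarrow> real" where
  "c_W W = integral {-1..1} W"

end

theory Submission
  imports Defs
begin

definition Dset :: "nat \<Rightarrow> (nat \<Rightarrow> real) set" where
  "Dset n = {a. a 0 = -1 \<and> (\<forall>k. 1 \<le> k \<and> k \<le> n \<longrightarrow> -1 \<le> a k \<and> a k \<le> 1) \<and> (\<forall>k>n. a k = 1)}"

definition Fd :: "real \<Rightarrow> (real \<Rightarrow> real) \<Rightarrow> nat \<Rightarrow> (nat \<Rightarrow> real) \<Rightarrow> real" where
  "Fd c W n a = c * (\<Sum>k\<le>n. (a (Suc k) - a k)\<^sup>2) + (\<Sum>k\<in>{1..n}. W (a k))"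

lemma sq_lattice:
  fixes x x' y y' :: real
  shows "(max y y' - max x x')\<^sup>2 + (min y y' - min x x')\<^sup>2 \<le> (y - x)\<^sup>2 + (y' - x')\<^sup>2"
proof (cases "y \<le> y'"; cases "x \<le> x'")
  assume a: "y \<le> y'" "\<not> x \<le> x'"
  have "0 \<le> (y' - y) * (x - x')" using a by simp
  then show ?thesis using a by (simp add: max_def min_def power2_eq_square algebra_simps)
next
  assume a: "\<not> y \<le> y'" "x \<le> x'"
  have "0 \<le> (y - y') * (x' - x)" using a by simp
  then show ?thesis using a by (simp add: max_def min_def power2_eq_square algebra_simps)
qed (simp_all add: max_def min_def)

lemma W_lattice: "W (max s t) + W (min s t) = W s + (W t :: real)"
  by (auto simp: max_def min_def)

lemma Dset_lattice:
  assumes "a \<in> Dset n" "b \<in> Dset n"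
  shows "(\<lambda>k. max (a k) (b k)) \<in> Dset n" "(\<lambda>k. min (a k) (b k)) \<in> Dset n"
  using assms by (auto simp: Dset_def)

lemma Fd_lattice:
  assumes "c \<ge> 0"
  shows "Fd c W n (\<lambda>k. max (a k) (b k)) + Fd c W n (\<lambda>k. min (a k) (b k)) \<le> Fd c W n a + Fd c W n b"
proof -
  have "(\<Sum>k\<le>n. (max (a (Suc k)) (b (Suc k)) - max (a k) (b k))\<^sup>2) + (\<Sum>k\<le>n. (min (a (Suc k)) (b (Suc k)) - min (a k) (b k))\<^sup>2)
     \<le> (\<Sum>k\<le>n. (a (Suc k) - a k)\<^sup>2) + (\<Sum>k\<le>n. (b (Suc k) - b k)\<^sup>2)"
    unfolding sum.distrib[symmetric] by (intro sum_mono sq_lattice)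
  then have 1: "c * (\<Sum>k\<le>n. (max (a (Suc k)) (b (Suc k)) - max (a k) (b k))\<^sup>2) + c * (\<Sum>k\<le>n. (min (a (Suc k)) (b (Suc k)) - min (a k) (b k))\<^sup>2)
     \<le> c * (\<Sum>k\<le>n. (a (Suc k) - a k)\<^sup>2) + c * (\<Sum>k\<le>n. (b (Suc k) - b k)\<^sup>2)"
    using assms by (simp add: distrib_left[symmetric] mult_left_mono)
  have 2: "(\<Sum>k\<in>{1..n}. W (max (a k) (b k))) + (\<Sum>k\<in>{1..n}. W (min (a k) (b k))) = (\<Sum>k\<in>{1..n}. W (a k)) + (\<Sum>k\<in>{1..n}. W (b k))"
    unfolding sum.distrib[symmetric] by (simp add: W_lattice)
  show ?thesis using 1 2 unfolding Fd_def by linarith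
qed


lemma Dset_PiE: "Dset n = Pi\<^sub>E UNIV (\<lambda>k. if k = 0 then {-1} else if k \<le> n then {-1..1} else {1::real})"
proof -
  have "a \<in> Dset n \<longleftrightarrow> (\<forall>k. a k \<in> (if k = 0 then {-1} else if k \<le> n then {-1..1} else {1::real}))" for a
  proof
    assume "a \<in> Dset n" then show "\<forall>k. a k \<in> (if k = 0 then {-1} else if k \<le> n then {-1..1} else {1::real})"
      unfolding Dset_def by (auto simp: not_le)
  next
    assume h: "\<forall>k. a k \<in> (if k = 0 then {-1} else if k \<le> n then {-1..1} else {1::real})"
    have "a 0 = -1" using h[rule_format, of 0] by simp
    moreover have "-1 \<le> a k \<and> a k \<le> 1" if "1 \<le> k" "k \<le> n" for k using h[rule_format, of k] that by auto
    moreover have "a k = 1" if "k > n" for k using h[rule_format, of k] that by auto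
    ultimately show "a \<in> Dset n" unfolding Dset_def by blast
  qed
  then show ?thesis unfolding PiE_UNIV_domain Pi_def by (simp add: set_eq_iff)
qed

lemma compact_Dset: "compact (Dset n)"
proof -
  have "compactin (product_topology (\<lambda>i. euclidean) UNIV) (Pi\<^sub>E UNIV (\<lambda>k. if k = 0 then {-1} else if k \<le> n then {-1..1} else {1::real}))"
    by (subst compactin_PiE) auto
  then show ?thesis unfolding Dset_PiE euclidean_product_topology by (simp add: compactin_euclidean_iff)
qed

lemma Dset_nonempty: "(\<lambda>k. if k = 0 then -1 else 1) \<in> Dset n"
  by (auto simp: Dset_def)

lemma cont_coord: "continuous_on S (\<lambda>x::nat\<Rightarrow>real. x k)"
  by (rule continuous_on_subset[OF continuous_on_product_coordinates]) auto

lemma continuous_Fd: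
  assumes "continuous_on UNIV W"
  shows "continuous_on S (Fd c W n)"
  unfolding Fd_def
  by (intro continuous_intros continuous_on_compose2[OF assms] cont_coord) auto

lemma greatest_min:
  assumes W: "continuous_on UNIV W" and c: "c \<ge> 0"
  shows "\<exists>g\<in>Dset n. (\<forall>a\<in>Dset n. Fd c W n g \<le> Fd c W n a) \<and>
           (\<forall>a\<in>Dset n. Fd c W n a \<le> Fd c W n g \<longrightarrow> (\<forall>k. a k \<le> g k))"
proof -
  obtain a0 where a0: "a0 \<in> Dset n" "\<forall>a\<in>Dset n. Fd c W n a0 \<le> Fd c W n a"
    using continuous_attains_inf[OF compact_Dset _ continuous_Fd[OF W]] Dset_nonempty by blast
  define m where "m = Fd c W n a0"
  define M where "M = Dset n \<inter> (Fd c W n) -` {m}"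
  have "closed M"
    unfolding M_def by (rule continuous_closed_preimage[OF continuous_Fd[OF W] compact_imp_closed[OF compact_Dset] closed_singleton])
  moreover have "Dset n \<inter> M = M" by (auto simp: M_def)
  ultimately have cM: "compact M" using compact_Int_closed[OF compact_Dset] by metis
  have "a0 \<in> M" unfolding M_def m_def using a0 by auto
  moreover have "continuous_on M (\<lambda>a::nat\<Rightarrow>real. \<Sum>k\<in>{1..n}. a k)"
    by (intro continuous_intros cont_coord)
  ultimately obtain g where g: "g \<in> M" "\<forall>a\<in>M. (\<Sum>k\<in>{1..n}. a k) \<le> (\<Sum>k\<in>{1..n}. g k)"
    using continuous_attains_sup[OF cM, of "\<lambda>a. \<Sum>k\<in>{1..n}. a k"] by blast
  have gD: "g \<in> Dset n" and gm: "Fd c W n g = m" using g unfolding M_def by auto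
  have mmin: "\<forall>a\<in>Dset n. m \<le> Fd c W n a" using a0 m_def by auto
  show ?thesis
  proof (intro bexI[OF _ gD] conjI ballI impI allI)
    fix a assume "a \<in> Dset n" then show "Fd c W n g \<le> Fd c W n a" using gm mmin by auto
  next
    fix a k assume aD: "a \<in> Dset n" and le: "Fd c W n a \<le> Fd c W n g"
    have l: "Fd c W n (\<lambda>k. max (a k) (g k)) + Fd c W n (\<lambda>k. min (a k) (g k)) \<le> Fd c W n a + Fd c W n g"
      by (rule Fd_lattice[OF c])
    have "m \<le> Fd c W n (\<lambda>k. min (a k) (g k))" using mmin Dset_lattice[OF aD gD] by auto
    moreover have "m \<le> Fd c W n (\<lambda>k. max (a k) (g k))" using mmin Dset_lattice[OF aD gD] by auto
    ultimately have "Fd c W n (\<lambda>k. max (a k) (g k)) = m" using l le gm mmin aD by fastforce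
    then have "(\<lambda>k. max (a k) (g k)) \<in> M" unfolding M_def using Dset_lattice[OF aD gD] by auto
    then have s: "(\<Sum>k\<in>{1..n}. max (a k) (g k)) \<le> (\<Sum>k\<in>{1..n}. g k)" using g by auto
    have "(\<Sum>k\<in>{1..n}. max (a k) (g k) - g k) = 0"
      using s sum_nonneg[of "{1..n}" "\<lambda>k. max (a k) (g k) - g k"] by (simp add: sum_subtractf)
    then have z: "\<forall>k\<in>{1..n}. max (a k) (g k) - g k = 0"
      by (subst sum_nonneg_eq_0_iff[symmetric]) auto
    show "a k \<le> g k"
    proof (cases "k \<in> {1..n}")
      case True then show ?thesis using z by (auto simp: max_def split: if_splits)
    next
      case False
      then have "k = 0 \<or> k > n" by auto
      then show ?thesis using aD gD unfolding Dset_def by auto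
    qed
  qed
qed


lemma Dset_Suc: assumes "a \<in> Dset n" shows "a \<in> Dset (Suc n)"
proof -
  have "-1 \<le> a k \<and> a k \<le> 1" if "1 \<le> k" "k \<le> Suc n" for k
  proof (cases "k \<le> n")
    case False then show ?thesis using assms by (auto simp: Dset_def)
  qed (use assms that in \<open>auto simp: Dset_def\<close>)
  then show ?thesis using assms by (auto simp: Dset_def)
qed

lemma Dset_Suc_back: "b \<in> Dset (Suc n) \<Longrightarrow> b (Suc n) = 1 \<Longrightarrow> b \<in> Dset n"
proof -
  assume b: "b \<in> Dset (Suc n)" "b (Suc n) = 1"
  have "b k = 1" if "k > n" for k
  proof (cases "k = Suc n")
    case False then have "k > Suc n" using that by simp
    then show ?thesis using b by (auto simp: Dset_def)
  qed (use b in simp)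
  then show ?thesis using b by (auto simp: Dset_def)
qed

lemma Fd_Suc:
  assumes "a \<in> Dset n" "W 1 = 0"
  shows "Fd c W (Suc n) a = Fd c W n a"
proof -
  have "a (Suc n) = 1" "a (Suc (Suc n)) = 1" using assms(1) by (auto simp: Dset_def)
  then show ?thesis unfolding Fd_def using assms(2) by simp
qed

definition sh :: "(nat \<Rightarrow> real) \<Rightarrow> nat \<Rightarrow> real" where
  "sh a k = (case k of 0 \<Rightarrow> -1 | Suc j \<Rightarrow> a j)"

lemma sh_Dset: assumes "a \<in> Dset n" shows "sh a \<in> Dset (Suc n)"
proof -
  have "-1 \<le> a k \<and> a k \<le> 1" if "k \<le> n" for k
  proof (cases "k = 0")
    case True then show ?thesis using assms by (auto simp: Dset_def)
  qed (use assms that in \<open>auto simp: Dset_def\<close>)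
  then show ?thesis using assms unfolding Dset_def sh_def by (auto split: nat.splits)
qed

lemma Fd_sh:
  assumes "a \<in> Dset n" "W (-1) = 0"
  shows "Fd c W (Suc n) (sh a) = Fd c W n a"
proof -
  have a0: "a 0 = -1" using assms(1) by (auto simp: Dset_def)
  have 1: "(\<Sum>k\<le>Suc n. (sh a (Suc k) - sh a k)\<^sup>2) = (\<Sum>k\<le>n. (a (Suc k) - a k)\<^sup>2)"
    by (subst sum.atMost_Suc_shift) (simp add: sh_def a0)
  have "(\<Sum>k\<in>{Suc 0..Suc n}. W (sh a k)) = (\<Sum>k\<in>{0..n}. W (sh a (Suc k)))"
    by (rule sum.shift_bounds_cl_Suc_ivl)
  then have "(\<Sum>k\<in>{1..Suc n}. W (sh a k)) = (\<Sum>k\<in>{0..n}. W (a k))"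
    by (simp add: sh_def)
  also have "\<dots> = (\<Sum>k\<in>{1..n}. W (a k))"
    by (simp add: sum.atLeast_Suc_atMost[of 0 n, simplified] a0 assms(2))
  finally show ?thesis unfolding Fd_def using 1 by simp
qed

lemma unsh:
  assumes "b \<in> Dset (Suc n)" "b 1 = -1"
  shows "(\<lambda>k. b (Suc k)) \<in> Dset n" "sh (\<lambda>k. b (Suc k)) = b"
  using assms unfolding Dset_def sh_def
  by (auto simp: fun_eq_iff split: nat.splits)

definition gm :: "real \<Rightarrow> (real \<Rightarrow> real) \<Rightarrow> nat \<Rightarrow> nat \<Rightarrow> real" where
  "gm c W n = (SOME g. g \<in> Dset n \<and> (\<forall>a\<in>Dset n. Fd c W n g \<le> Fd c W n a) \<and>
           (\<forall>a\<in>Dset n. Fd c W n a \<le> Fd c W n g \<longrightarrow> (\<forall>k. a k \<le> g k)))"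

lemma gm:
  assumes W: "continuous_on UNIV W" and c: "c \<ge> 0"
  shows "gm c W n \<in> Dset n" "\<And>a. a \<in> Dset n \<Longrightarrow> Fd c W n (gm c W n) \<le> Fd c W n a"
     "\<And>a k. a \<in> Dset n \<Longrightarrow> Fd c W n a \<le> Fd c W n (gm c W n) \<Longrightarrow> a k \<le> gm c W n k"
  using someI_ex[OF greatest_min[OF W c, of n, unfolded Bex_def]] unfolding gm_def[symmetric]
  by auto

lemma interleave:
  assumes W: "continuous_on UNIV W" and c: "c \<ge> 0" and W1: "W 1 = 0" and Wm1: "W (-1) = 0"
  shows "gm c W (Suc n) k \<le> gm c W n k" "gm c W n k \<le> gm c W (Suc n) (Suc k)"
proof -
  let ?a = "gm c W n" and ?b = "gm c W (Suc n)"
  have aD: "?a \<in> Dset n" and bD: "?b \<in> Dset (Suc n)" using gm[OF W c] by auto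
  have aD': "?a \<in> Dset (Suc n)" using Dset_Suc[OF aD] .
  define t where "t = (\<lambda>k. max (?b k) (?a k))"
  have tD: "t \<in> Dset (Suc n)" unfolding t_def by (rule Dset_lattice[OF bD aD'])
  have "t (Suc n) = 1" using aD bD unfolding t_def Dset_def by auto
  then have tD': "t \<in> Dset n" using Dset_Suc_back[OF tD] by simp
  have lat: "Fd c W (Suc n) t + Fd c W (Suc n) (\<lambda>k. min (?b k) (?a k)) \<le> Fd c W (Suc n) ?b + Fd c W (Suc n) ?a"
    unfolding t_def by (rule Fd_lattice[OF c])
  have "Fd c W (Suc n) ?b \<le> Fd c W (Suc n) (\<lambda>k. min (?b k) (?a k))"
    using gm(2)[OF W c Dset_lattice(2)[OF bD aD']] .
  then have "Fd c W n t \<le> Fd c W n ?a"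
    using lat Fd_Suc[where W=W and c=c, OF tD' W1] Fd_Suc[where W=W and c=c, OF aD W1] by linarith
  then have "t k \<le> ?a k" using gm(3)[OF W c tD'] by blast
  then show "?b k \<le> ?a k" unfolding t_def by simp
next
  let ?a = "gm c W n" and ?b = "gm c W (Suc n)"
  have aD: "?a \<in> Dset n" and bD: "?b \<in> Dset (Suc n)" using gm[OF W c] by auto
  have shD: "sh ?a \<in> Dset (Suc n)" using sh_Dset[OF aD] .
  define t where "t = (\<lambda>k. min (?b k) (sh ?a k))"
  have tD: "t \<in> Dset (Suc n)" unfolding t_def by (rule Dset_lattice[OF bD shD])
  have "?a 0 = -1" "-1 \<le> ?b 1" using aD bD unfolding Dset_def by auto
  then have "t 1 = -1" unfolding t_def sh_def by simp
  note u = unsh[OF tD this]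
  have "Fd c W n ?a \<le> Fd c W n (\<lambda>k. t (Suc k))" using gm(2)[OF W c u(1)] .
  then have "Fd c W (Suc n) (sh ?a) \<le> Fd c W (Suc n) t"
    using Fd_sh[where W=W and c=c, OF aD Wm1] Fd_sh[where W=W and c=c, OF u(1) Wm1] u(2) by simp
  moreover have "Fd c W (Suc n) (\<lambda>k. max (?b k) (sh ?a k)) + Fd c W (Suc n) t \<le> Fd c W (Suc n) ?b + Fd c W (Suc n) (sh ?a)"
    unfolding t_def by (rule Fd_lattice[OF c])
  ultimately have "Fd c W (Suc n) (\<lambda>k. max (?b k) (sh ?a k)) \<le> Fd c W (Suc n) ?b" by linarith
  then have "max (?b (Suc k)) (sh ?a (Suc k)) \<le> ?b (Suc k)"
    using gm(3)[OF W c Dset_lattice(1)[OF bD shD]] by blast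
  then show "?a k \<le> ?b (Suc k)" by (simp add: sh_def)
qed


definition clp :: "real \<Rightarrow> real" where "clp t = max (-1) (min 1 t)"

lemma clp_range: "-1 \<le> clp t" "clp t \<le> 1" by (auto simp: clp_def)
lemma clp_id: "-1 \<le> t \<Longrightarrow> t \<le> 1 \<Longrightarrow> clp t = t" by (auto simp: clp_def)
lemma clp_lip: "\<bar>clp x - clp y\<bar> \<le> \<bar>x - y\<bar>" by (auto simp: clp_def)
lemma clp_sq: "(clp x - clp y)\<^sup>2 \<le> (x - y)\<^sup>2"
  using clp_lip[of x y] by (metis abs_ge_zero power2_abs power_mono)

lemma W_clp:
  assumes "W 1 = 0" "W (-1) = 0" "\<And>t. W t \<ge> (0::real)"
  shows "W (clp t) \<le> W t"
  using assms by (auto simp: clp_def max_def min_def)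

lemma Fd_clp:
  assumes c: "c \<ge> 0" and W: "W 1 = 0" "W (-1) = 0" "\<And>t. W t \<ge> (0::real)"
    and a: "a 0 = -1" "\<forall>k>n. a k = 1"
  shows "(\<lambda>k. clp (a k)) \<in> Dset n" "Fd c W n (\<lambda>k. clp (a k)) \<le> Fd c W n a"
proof -
  show "(\<lambda>k. clp (a k)) \<in> Dset n" using a clp_range by (auto simp: Dset_def clp_id)
  have "(\<Sum>k\<le>n. (clp (a (Suc k)) - clp (a k))\<^sup>2) \<le> (\<Sum>k\<le>n. (a (Suc k) - a k)\<^sup>2)"
    by (intro sum_mono clp_sq)
  then have "c * (\<Sum>k\<le>n. (clp (a (Suc k)) - clp (a k))\<^sup>2) \<le> c * (\<Sum>k\<le>n. (a (Suc k) - a k)\<^sup>2)"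
    using c mult_left_mono by blast
  moreover have "(\<Sum>k\<in>{1..n}. W (clp (a k))) \<le> (\<Sum>k\<in>{1..n}. W (a k))"
    by (intro sum_mono W_clp[OF W])
  ultimately show "Fd c W n (\<lambda>k. clp (a k)) \<le> Fd c W n a" unfolding Fd_def by linarith
qed

context
  fixes c :: real and W :: "real \<Rightarrow> real"
  assumes Wc: "continuous_on UNIV W" and c: "c \<ge> 0" and W1: "W 1 = 0" and Wm1: "W (-1) = 0"
begin

lemma gm_range: "-1 \<le> gm c W n k" "gm c W n k \<le> 1"
proof -
  have g: "gm c W n \<in> Dset n" using gm(1)[OF Wc c] .
  have "-1 \<le> gm c W n k \<and> gm c W n k \<le> 1"
  proof (cases "k = 0")
    case True then show ?thesis using g by (auto simp: Dset_def)
  next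
    case False
    show ?thesis
    proof (cases "k \<le> n")
      case True then show ?thesis using g False by (auto simp: Dset_def)
    next
      case False then show ?thesis using g by (auto simp: Dset_def)
    qed
  qed
  then show "-1 \<le> gm c W n k" "gm c W n k \<le> 1" by auto
qed

lemma gm_0: "gm c W n 0 = -1" using gm(1)[OF Wc c] by (auto simp: Dset_def)

lemma gm_Suc_idx: "gm c W n k \<le> gm c W n (Suc k)"
  using interleave[OF Wc c W1 Wm1, of n k] interleave[OF Wc c W1 Wm1, of n "Suc k"] by linarith

lemma gm_mono_idx: "k \<le> k' \<Longrightarrow> gm c W n k \<le> gm c W n k'"
  using lift_Suc_mono_le[of "gm c W n", OF gm_Suc_idx] by blast

lemma gm_mono_n: "n \<le> m \<Longrightarrow> gm c W m k \<le> gm c W n k"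
proof (induction m rule: dec_induct)
  case (step m)
  then show ?case using interleave(1)[OF Wc c W1 Wm1, of m k] by linarith
qed simp

lemma gm_cross:
  assumes "k < k'" "m \<le> Suc n"
  shows "gm c W n k \<le> gm c W m k'"
proof (cases "m \<le> n")
  case True
  then show ?thesis using gm_mono_n[OF True, of k] gm_mono_idx[of k k' m] assms by linarith
next
  case False
  then have m: "m = Suc n" using assms by simp
  show ?thesis using interleave(2)[OF Wc c W1 Wm1, of n k] gm_mono_idx[of "Suc k" k' "Suc n"] assms m by simp
qed

end


lemma meas_restr: "v \<in> borel_measurable lborel \<Longrightarrow> (\<lambda>y. ereal (v y)) \<in> borel_measurable (restrict_space lborel S)"
  by (intro measurable_restrict_space1 borel_measurable_ereal)

lemma AE_restr_Ioo: "(AE y in restrict_space lborel {a<..<b::real}. P y) \<longleftrightarrow> (AE y in lborel. a < y \<and> y < b \<longrightarrow> P y)"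
  by (subst AE_restrict_space_iff) (auto intro!: borel_open)

lemma ess_sup_on_le:
  assumes "v \<in> borel_measurable lborel" "AE y in lborel. a < y \<and> y < b \<longrightarrow> ereal (v y) \<le> z"
  shows "ess_sup_on a b v \<le> z"
  unfolding ess_sup_on_def
  by (rule esssup_I[OF meas_restr[OF assms(1)]]) (use assms(2) in \<open>simp add: AE_restr_Ioo\<close>)

lemma ess_sup_on_AE:
  assumes "v \<in> borel_measurable lborel"
  shows "AE y in lborel. a < y \<and> y < b \<longrightarrow> ereal (v y) \<le> ess_sup_on a b v"
  using esssup_AE[where M="restrict_space lborel {a<..<b}" and f="\<lambda>y. ereal (v y)"]
  unfolding ess_sup_on_def AE_restr_Ioo .

lemma ess_inf_on_eq: "ess_inf_on a b v = - ess_sup_on a b (\<lambda>y. - v y)"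
  unfolding ess_inf_on_def ess_sup_on_def by simp

lemma neg_le1: "z \<le> ereal t \<Longrightarrow> ereal (- t) \<le> - z"
  by (metis ereal_minus_le_minus uminus_ereal.simps(1))
lemma neg_le2: "ereal (- t) \<le> z \<Longrightarrow> - z \<le> ereal t"
  by (metis ereal_uminus_le_reorder uminus_ereal.simps(1))
lemma neg_le3: "(x::ereal) \<le> - z \<Longrightarrow> z \<le> - x"
  by (metis ereal_minus_le_minus ereal_uminus_uminus)

lemma ess_inf_on_ge:
  assumes "v \<in> borel_measurable lborel" "AE y in lborel. a < y \<and> y < b \<longrightarrow> z \<le> ereal (v y)"
  shows "z \<le> ess_inf_on a b v"
proof -
  have "ess_sup_on a b (\<lambda>y. - v y) \<le> - z"
    by (rule ess_sup_on_le) (use assms in \<open>auto elim!: eventually_mono intro: neg_le1\<close>)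
  then show ?thesis unfolding ess_inf_on_eq by (rule neg_le3)
qed

lemma ess_inf_on_AE:
  assumes "v \<in> borel_measurable lborel"
  shows "AE y in lborel. a < y \<and> y < b \<longrightarrow> ess_inf_on a b v \<le> ereal (v y)"
proof -
  have m: "(\<lambda>y. - v y) \<in> borel_measurable lborel" using assms by measurable
  show ?thesis using ess_sup_on_AE[OF m, of a b] unfolding ess_inf_on_eq
    by (auto elim!: eventually_mono intro: neg_le2)
qed

lemma Ioo_not_null:
  assumes "AE y in lborel. a < y \<and> y < b \<longrightarrow> False" "a < (b::real)"
  shows False
proof -
  obtain N where N: "{x \<in> space lborel. \<not> (a < x \<and> x < b \<longrightarrow> False)} \<subseteq> N" "emeasure lborel N = 0" "N \<in> sets lborel"
    using assms(1) by (rule AE_E)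
  then have "{a<..<b} \<subseteq> N" by auto
  then have "emeasure lborel {a<..<b} \<le> emeasure lborel N" by (intro emeasure_mono N(3))
  then show False using N(2) assms(2) by simp
qed

lemma ess_inf_le_sup:
  assumes "v \<in> borel_measurable lborel" "a < b"
  shows "ess_inf_on a b v \<le> ess_sup_on a b v"
proof (rule ccontr)
  assume "\<not> ?thesis"
  then have lt: "ess_sup_on a b v < ess_inf_on a b v" by simp
  have "AE y in lborel. a < y \<and> y < b \<longrightarrow> False"
    using ess_sup_on_AE[OF assms(1), of a b] ess_inf_on_AE[OF assms(1), of a b]
    by eventually_elim (use lt in auto)
  then show False using Ioo_not_null assms(2) by blast
qed

lemma ess_bounds:
  assumes "v \<in> borel_measurable lborel" "a < b" "AE y in lborel. \<bar>v y\<bar> \<le> C"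
  shows "ereal (-C) \<le> ess_inf_on a b v" "ess_sup_on a b v \<le> ereal C"
proof -
  show "ess_sup_on a b v \<le> ereal C"
    by (rule ess_sup_on_le[OF assms(1)]) (use assms(3) in \<open>auto elim!: eventually_mono\<close>)
  show "ereal (-C) \<le> ess_inf_on a b v"
    by (rule ess_inf_on_ge[OF assms(1)]) (use assms(3) in \<open>auto elim!: eventually_mono\<close>)
qed

lemma osc_facts:
  assumes "v \<in> borel_measurable lborel" "a < b" "AE y in lborel. \<bar>v y\<bar> \<le> C"
  shows "ess_sup_on a b v = ereal (real_of_ereal (ess_sup_on a b v))"
        "ess_inf_on a b v = ereal (real_of_ereal (ess_inf_on a b v))"
        "osc_on a b v = real_of_ereal (ess_sup_on a b v) - real_of_ereal (ess_inf_on a b v)"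
        "0 \<le> osc_on a b v" "osc_on a b v \<le> 2 * C"
proof -
  note b = ess_bounds[OF assms] and il = ess_inf_le_sup[OF assms(1,2)]
  obtain s where s: "ess_sup_on a b v = ereal s"
    using b il by (cases "ess_sup_on a b v") auto
  obtain i where i: "ess_inf_on a b v = ereal i"
    using b il by (cases "ess_inf_on a b v") auto
  show "ess_sup_on a b v = ereal (real_of_ereal (ess_sup_on a b v))"
       "ess_inf_on a b v = ereal (real_of_ereal (ess_inf_on a b v))" using s i by auto
  show "osc_on a b v = real_of_ereal (ess_sup_on a b v) - real_of_ereal (ess_inf_on a b v)"
    unfolding osc_on_def using s i by simp
  show "0 \<le> osc_on a b v" "osc_on a b v \<le> 2 * C" unfolding osc_on_def using s i b il by auto
qed

lemma osc_mono_fun: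
  assumes "mono u" "a < b" "\<And>y. \<bar>u y\<bar> \<le> C"
  shows "0 \<le> osc_on a b u" "osc_on a b u \<le> u b - u a"
proof -
  have m: "u \<in> borel_measurable lborel" using assms(1) borel_measurable_mono by simp
  have C: "AE y in lborel. \<bar>u y\<bar> \<le> C" using assms(3) by simp
  note f = osc_facts[OF m assms(2) C]
  show "0 \<le> osc_on a b u" using f by simp
  have "ess_sup_on a b u \<le> ereal (u b)"
    by (rule ess_sup_on_le[OF m]) (auto intro!: monoD[OF assms(1)])
  moreover have "ereal (u a) \<le> ess_inf_on a b u"
    by (rule ess_inf_on_ge[OF m]) (auto intro!: monoD[OF assms(1)])
  ultimately show "osc_on a b u \<le> u b - u a" using f(1,2,3)
    by (metis ereal_less_eq(3) diff_mono)
qed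


lemma null_right:
  fixes G :: "real set" and \<delta> :: real
  assumes "\<delta> > 0"
  shows "AE p in lborel. \<not> (p \<in> G \<and> G \<inter> {p<..<p+\<delta>} \<in> null_sets lborel)"
proof -
  define T where "T = {p. p \<in> G \<and> G \<inter> {p<..<p+\<delta>} \<in> null_sets lborel}"
  define J where "J = (\<lambda>j::int. {real_of_int j * \<delta> ..< (real_of_int j + 1) * \<delta>})"
  define P where "P = (\<lambda>j \<rho>. \<exists>p\<in>T \<inter> J j. p < \<rho>)"
  define pp where "pp = (\<lambda>j \<rho>. SOME p. p \<in> T \<inter> J j \<and> p < \<rho>)"
  define X where "X = (\<lambda>(j,\<rho>). if P j \<rho> then G \<inter> {pp j \<rho><..<pp j \<rho>+\<delta>} else {})"
  define Z where "Z = (\<lambda>j. {t \<in> T \<inter> J j. \<forall>p\<in>T \<inter> J j. t \<le> p})"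
  have ppP: "pp j \<rho> \<in> T \<inter> J j \<and> pp j \<rho> < \<rho>" if "P j \<rho>" for j \<rho>
    using someI_ex[of "\<lambda>p. p \<in> T \<inter> J j \<and> p < \<rho>"] that unfolding P_def pp_def by blast
  have Jlen: "t - p < \<delta>" if "t \<in> J j" "p \<in> J j" for t p j
    using that unfolding J_def by (auto simp: algebra_simps)
  have Jin: "t \<in> J (\<lfloor>t / \<delta>\<rfloor>)" for t
  proof -
    have 1: "real_of_int \<lfloor>t / \<delta>\<rfloor> \<le> t / \<delta>" and 2: "t / \<delta> < real_of_int \<lfloor>t / \<delta>\<rfloor> + 1" by linarith+
    have "real_of_int \<lfloor>t / \<delta>\<rfloor> * \<delta> \<le> t" using 1 pos_le_divide_eq[OF assms] by blast
    moreover have "t < (real_of_int \<lfloor>t / \<delta>\<rfloor> + 1) * \<delta>" using 2 pos_divide_less_eq[OF assms] by blast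
    ultimately show ?thesis unfolding J_def by auto
  qed
  have cover: "T \<subseteq> (\<Union>j. Z j) \<union> (\<Union>(X ` (UNIV \<times> \<rat>)))"
  proof
    fix t assume tT: "t \<in> T"
    define j where "j = \<lfloor>t / \<delta>\<rfloor>"
    have tJ: "t \<in> J j" unfolding j_def by (rule Jin)
    show "t \<in> (\<Union>j. Z j) \<union> (\<Union>(X ` (UNIV \<times> \<rat>)))"
    proof (cases "t \<in> Z j")
      case True then show ?thesis by blast
    next
      case False
      then obtain p where p: "p \<in> T \<inter> J j" "p < t" using tT tJ unfolding Z_def by (auto simp: not_le)
      obtain \<rho> where \<rho>: "\<rho> \<in> \<rat>" "p < \<rho>" "\<rho> < t" using Rats_dense_in_real[OF p(2)] by blast
      have Pj: "P j \<rho>" unfolding P_def using p \<rho> by blast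
      note pp = ppP[OF Pj]
      have "t - pp j \<rho> < \<delta>" using Jlen[OF tJ] pp by blast
      then have "t \<in> X (j, \<rho>)" unfolding X_def using Pj pp \<rho> tT unfolding T_def by auto
      then show ?thesis using \<rho>(1) by blast
    qed
  qed
  have Zfin: "countable (Z j)" for j
  proof -
    have "x = y" if "x \<in> Z j" "y \<in> Z j" for x y using that unfolding Z_def by (auto intro: antisym)
    then have "Z j = {} \<or> (\<exists>x. Z j = {x})" by blast
    then show ?thesis by auto
  qed
  have n1: "(\<Union>j. Z j) \<in> null_sets lborel"
    by (rule countable_imp_null_set_lborel) (auto intro: Zfin)
  have n2: "(\<Union>(X ` (UNIV \<times> \<rat>))) \<in> null_sets lborel"
  proof (rule null_sets_UN')
    show "countable ((UNIV::int set) \<times> (\<rat>::real set))" by (rule countable_SIGMA) (simp_all add: countable_rat)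
    fix i assume "i \<in> (UNIV::int set) \<times> (\<rat>::real set)"
    obtain j \<rho> where i: "i = (j, \<rho>)" by (cases i)
    show "X i \<in> null_sets lborel"
    proof (cases "P j \<rho>")
      case True then show ?thesis using ppP[OF True] unfolding X_def i T_def by auto
    qed (simp add: X_def i)
  qed
  show ?thesis
    by (rule AE_I'[OF null_sets.Un[OF n1 n2]]) (use cover in \<open>auto simp: T_def\<close>)
qed

lemma null_left:
  fixes G :: "real set" and \<delta> :: real
  assumes "\<delta> > 0"
  shows "AE p in lborel. \<not> (p \<in> G \<and> G \<inter> {p-\<delta><..<p} \<in> null_sets lborel)"
proof -
  define T where "T = {p. p \<in> G \<and> G \<inter> {p-\<delta><..<p} \<in> null_sets lborel}"
  define J where "J = (\<lambda>j::int. {real_of_int j * \<delta> <.. (real_of_int j + 1) * \<delta>})"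
  define P where "P = (\<lambda>j \<rho>. \<exists>p\<in>T \<inter> J j. \<rho> < p)"
  define pp where "pp = (\<lambda>j \<rho>. SOME p. p \<in> T \<inter> J j \<and> \<rho> < p)"
  define X where "X = (\<lambda>(j,\<rho>). if P j \<rho> then G \<inter> {pp j \<rho>-\<delta><..<pp j \<rho>} else {})"
  define Z where "Z = (\<lambda>j. {t \<in> T \<inter> J j. \<forall>p\<in>T \<inter> J j. p \<le> t})"
  have ppP: "pp j \<rho> \<in> T \<inter> J j \<and> \<rho> < pp j \<rho>" if "P j \<rho>" for j \<rho>
    using someI_ex[of "\<lambda>p. p \<in> T \<inter> J j \<and> \<rho> < p"] that unfolding P_def pp_def by blast
  have Jlen: "t - p < \<delta>" if "t \<in> J j" "p \<in> J j" for t p j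
    using that unfolding J_def by (auto simp: algebra_simps)
  have Jin: "t \<in> J (\<lceil>t / \<delta>\<rceil> - 1)" for t
  proof -
    have 1: "real_of_int (\<lceil>t / \<delta>\<rceil> - 1) < t / \<delta>" and 2: "t / \<delta> \<le> real_of_int (\<lceil>t / \<delta>\<rceil> - 1) + 1"
      using ceiling_correct[of "t / \<delta>"] by simp_all
    have "real_of_int (\<lceil>t / \<delta>\<rceil> - 1) * \<delta> < t" using 1 pos_less_divide_eq[OF assms] by blast
    moreover have "t \<le> (real_of_int (\<lceil>t / \<delta>\<rceil> - 1) + 1) * \<delta>" using 2 pos_divide_le_eq[OF assms] by blast
    ultimately show ?thesis unfolding J_def by auto
  qed
  have cover: "T \<subseteq> (\<Union>j. Z j) \<union> (\<Union>(X ` (UNIV \<times> \<rat>)))"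
  proof
    fix t assume tT: "t \<in> T"
    define j where "j = \<lceil>t / \<delta>\<rceil> - 1"
    have tJ: "t \<in> J j" unfolding j_def by (rule Jin)
    show "t \<in> (\<Union>j. Z j) \<union> (\<Union>(X ` (UNIV \<times> \<rat>)))"
    proof (cases "t \<in> Z j")
      case True then show ?thesis by blast
    next
      case False
      then obtain p where p: "p \<in> T \<inter> J j" "t < p" using tT tJ unfolding Z_def by (auto simp: not_le)
      obtain \<rho> where \<rho>: "\<rho> \<in> \<rat>" "t < \<rho>" "\<rho> < p" using Rats_dense_in_real[OF p(2)] by blast
      have Pj: "P j \<rho>" unfolding P_def using p \<rho> by blast
      note pp = ppP[OF Pj]
      have "pp j \<rho> - t < \<delta>" using Jlen[OF _ tJ] pp by blast
      then have "t \<in> X (j, \<rho>)" unfolding X_def using Pj pp \<rho> tT unfolding T_def by auto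
      then show ?thesis using \<rho>(1) by blast
    qed
  qed
  have Zfin: "countable (Z j)" for j
  proof -
    have "x = y" if "x \<in> Z j" "y \<in> Z j" for x y using that unfolding Z_def by (auto intro: antisym)
    then have "Z j = {} \<or> (\<exists>x. Z j = {x})" by blast
    then show ?thesis by auto
  qed
  have n1: "(\<Union>j. Z j) \<in> null_sets lborel"
    by (rule countable_imp_null_set_lborel) (auto intro: Zfin)
  have n2: "(\<Union>(X ` (UNIV \<times> \<rat>))) \<in> null_sets lborel"
  proof (rule null_sets_UN')
    show "countable ((UNIV::int set) \<times> (\<rat>::real set))" by (rule countable_SIGMA) (simp_all add: countable_rat)
    fix i assume "i \<in> (UNIV::int set) \<times> (\<rat>::real set)"
    obtain j \<rho> where i: "i = (j, \<rho>)" by (cases i)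
    show "X i \<in> null_sets lborel"
    proof (cases "P j \<rho>")
      case True then show ?thesis using ppP[OF True] unfolding X_def i T_def by auto
    qed (simp add: X_def i)
  qed
  show ?thesis
    by (rule AE_I'[OF null_sets.Un[OF n1 n2]]) (use cover in \<open>auto simp: T_def\<close>)
qed


lemma approx_sup:
  assumes v: "v \<in> borel_measurable lborel" and d: "\<delta> > 0"
    and nr: "\<And>G. AE p in lborel. \<not> (p \<in> G \<and> G \<inter> {l p<..<h p} \<in> null_sets lborel)"
  shows "AE p in lborel. ereal (v p) \<le> ess_sup_on (l p) (h p) v"
proof -
  define G where "G = (\<lambda>q::real. {y. q < v y})"
  have Gm: "G q \<in> sets lborel" for q unfolding G_def using v by measurable
  have "AE p in lborel. \<forall>q\<in>\<rat>. \<not> (p \<in> G q \<and> G q \<inter> {l p<..<h p} \<in> null_sets lborel)"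
    unfolding AE_ball_countable[OF countable_rat] using nr by blast
  then show ?thesis
  proof eventually_elim
    case (elim p)
    show ?case
    proof (rule ccontr)
      assume "\<not> ?case"
      then have lt: "ess_sup_on (l p) (h p) v < ereal (v p)" by simp
      obtain q where q: "q \<in> \<rat>" "ess_sup_on (l p) (h p) v < ereal q" "q < v p"
      proof (cases "ess_sup_on (l p) (h p) v")
        case (real e)
        then have "e < v p" using lt by simp
        then obtain q where "q \<in> \<rat>" "e < q" "q < v p" using Rats_dense_in_real by blast
        then show ?thesis using that real by auto
      next
        case PInf then show ?thesis using lt by simp
      next
        case MInf
        obtain q where "q \<in> \<rat>" "v p - 1 < q" "q < v p" using Rats_dense_in_real[of "v p - 1" "v p"] by auto
        then show ?thesis using that MInf by auto
      qed
      have "AE y in lborel. y \<notin> G q \<inter> {l p<..<h p}"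
        using ess_sup_on_AE[OF v, of "l p" "h p"]
      proof eventually_elim
        case (elim y)
        show ?case
        proof
          assume "y \<in> G q \<inter> {l p<..<h p}"
          then have a: "ereal (v y) \<le> ess_sup_on (l p) (h p) v" and b: "q < v y" using elim by (auto simp: G_def)
          have "ereal (v y) < ereal q" using a q(2) by (rule le_less_trans)
          then show False using b by simp
        qed
      qed
      then have "G q \<inter> {l p<..<h p} \<in> null_sets lborel"
        using Gm by (subst AE_iff_null_sets) auto
      moreover have "p \<in> G q" using q unfolding G_def by simp
      ultimately show False using elim q(1) by blast
    qed
  qed
qed

lemma approx_both:
  assumes v: "v \<in> borel_measurable lborel" and d: "\<delta> > 0"
    and nr: "\<And>G. AE p in lborel. \<not> (p \<in> G \<and> G \<inter> {l p<..<h p} \<in> null_sets lborel)"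
  shows "AE p in lborel. ess_inf_on (l p) (h p) v \<le> ereal (v p) \<and> ereal (v p) \<le> ess_sup_on (l p) (h p) v"
proof -
  have m: "(\<lambda>y. - v y) \<in> borel_measurable lborel" using v by measurable
  show ?thesis using approx_sup[OF v d nr] approx_sup[OF m d nr]
    by eventually_elim (auto simp: ess_inf_on_eq intro: neg_le2)
qed


lemma AE_translate:
  assumes "AE p in lborel. P p"
  shows "AE x in lborel. P (x + (a::real))"
proof -
  obtain N where N: "{x \<in> space lborel. \<not> P x} \<subseteq> N" "emeasure lborel N = 0" "N \<in> sets lborel"
    using assms by (rule AE_E)
  have "N \<in> null_sets lborel" using N by auto
  then have n: "{x. x - (- a) \<in> N} \<in> null_sets lborel" by (rule null_sets_translation)
  show ?thesis by (rule AE_I'[OF n]) (use N(1) in auto)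
qed

lemma esssup_window_open:
  assumes v: "v \<in> borel_measurable lborel" and r: "r > 0"
  shows "open {x. a < ess_sup_on (x - r) (x + r) v}"
  unfolding open_dist
proof (intro ballI, simp only: mem_Collect_eq)
  fix x assume ax: "a < ess_sup_on (x - r) (x + r) v"
  obtain w where w: "a < w" "w < ess_sup_on (x - r) (x + r) v" using dense[OF ax] by blast
  define S where "S = (\<lambda>n::nat. {y. x - r + 1 / (real n + 1) < y \<and> y < x + r - 1 / (real n + 1) \<and> w < ereal (v y)})"
  have Sm: "S n \<in> sets lborel" for n unfolding S_def using v by measurable
  have "\<exists>n. S n \<notin> null_sets lborel"
  proof (rule ccontr)
    assume "\<not> ?thesis"
    then have "(\<Union>n. S n) \<in> null_sets lborel" by auto
    then have "AE y in lborel. y \<notin> (\<Union>n. S n)" by (rule AE_not_in)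
    then have "AE y in lborel. x - r < y \<and> y < x + r \<longrightarrow> ereal (v y) \<le> w"
    proof eventually_elim
      case (elim y)
      show ?case
      proof
        assume y: "x - r < y \<and> y < x + r"
        have pos: "0 < min (y - (x - r)) (x + r - y)" using y by auto
        obtain m where m: "m > 0" "inverse (real m) < min (y - (x - r)) (x + r - y)"
          using ex_inverse_of_nat_less[OF pos] by blast
        define n where "n = m - 1"
        have "real n + 1 = real m" using m(1) unfolding n_def by (simp add: of_nat_diff)
        then have n: "1 / (real n + 1) < min (y - (x - r)) (x + r - y)" using m(2) by (simp add: inverse_eq_divide)
        show "ereal (v y) \<le> w"
        proof (rule ccontr)
          assume "\<not> ?thesis"
          then have "y \<in> S n" unfolding S_def using n by auto
          then show False using elim by auto
        qed
      qed
    qed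
    then have "ess_sup_on (x - r) (x + r) v \<le> w" by (rule ess_sup_on_le[OF v])
    then show False using w by simp
  qed
  then obtain n where n: "S n \<notin> null_sets lborel" by blast
  show "\<exists>e>0. \<forall>y. dist y x < e \<longrightarrow> a < ess_sup_on (y - r) (y + r) v"
  proof (intro exI[of _ "1 / (real n + 1)"] conjI allI impI)
    show "0 < 1 / (real n + 1)" by simp
    fix x' assume d: "dist x' x < 1 / (real n + 1)"
    show "a < ess_sup_on (x' - r) (x' + r) v"
    proof (rule ccontr)
      assume "\<not> ?thesis"
      then have le: "ess_sup_on (x' - r) (x' + r) v \<le> w" using w by simp
      have "AE y in lborel. y \<notin> S n"
        using ess_sup_on_AE[OF v, of "x' - r" "x' + r"]
      proof eventually_elim
        case (elim y)
        show ?case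
        proof
          assume y: "y \<in> S n"
          then have "x' - r < y \<and> y < x' + r" using d unfolding S_def by (auto simp: dist_real_def)
          then have "ereal (v y) \<le> w" using elim le by auto
          then show False using y unfolding S_def by auto
        qed
      qed
      then have "S n \<in> null_sets lborel" using Sm by (subst AE_iff_null_sets) auto
      then show False using n by simp
    qed
  qed
qed

lemma esssup_window_meas:
  assumes v: "v \<in> borel_measurable lborel" and r: "r > 0"
  shows "(\<lambda>x. ess_sup_on (x - r) (x + r) v) \<in> borel_measurable lborel"
proof -
  have "(\<lambda>x. ess_sup_on (x - r) (x + r) v) -` {a<..} \<inter> space lborel \<in> sets lborel" for a
  proof -
    have "(\<lambda>x. ess_sup_on (x - r) (x + r) v) -` {a<..} \<inter> space lborel = {x. a < ess_sup_on (x - r) (x + r) v}"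
      by auto
    then show ?thesis using borel_open[OF esssup_window_open[OF v r]] by simp
  qed
  then show ?thesis unfolding borel_measurable_ereal_iff_Ioi by blast
qed

lemma osc_window_meas:
  assumes v: "v \<in> borel_measurable lborel" and r: "r > 0"
  shows "(\<lambda>x. osc_on (x - r) (x + r) v) \<in> borel_measurable lborel"
proof -
  have m: "(\<lambda>y. - v y) \<in> borel_measurable lborel" using v by measurable
  note s1 = esssup_window_meas[OF v r] and s2 = esssup_window_meas[OF m r]
  have "(\<lambda>x. real_of_ereal (ess_sup_on (x - r) (x + r) v - (- ess_sup_on (x - r) (x + r) (\<lambda>y. - v y)))) \<in> borel_measurable lborel"
    using s1 s2 by measurable
  then show ?thesis unfolding osc_on_def ess_inf_on_eq by simp
qed


locale setting =
  fixes r R :: real and W :: "real \<Rightarrow> real"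
  assumes r: "r > 0" and H: "hyp_H W" and RR: "R > 2 * r + 1"
begin

lemma Wc: "continuous_on UNIV W" using H by (simp add: hyp_H_def)
lemma W1: "W 1 = 0" using H by (simp add: hyp_H_def)
lemma Wm1: "W (-1) = 0" using H by (simp add: hyp_H_def)
lemma Wnn: "W t \<ge> 0"
proof -
  have "\<forall>t. t \<noteq> 1 \<and> t \<noteq> -1 \<longrightarrow> W t > 0" using H by (simp add: hyp_H_def)
  then show ?thesis using W1 Wm1 by (cases "t = 1 \<or> t = -1") (auto simp: less_imp_le)
qed

definition "cc = 1 / (2 * r\<^sup>2)"
definition "A = - R + r"
definition "B = R - r"

lemma cc_pos: "cc > 0" unfolding cc_def using r by simp
lemma AB: "A < B" "A - 2 * r = - R - r" "B + 2 * r = R + r" "A < -1" "1 < B"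
  unfolding A_def B_def using r RR by auto

definition nn :: "real \<Rightarrow> nat" where "nn s = nat \<lceil>(B - s) / (2 * r)\<rceil> - 1"

lemma nn_iff:
  assumes "s < B"
  shows "s + 2 * r * real k < B \<longleftrightarrow> k \<le> nn s"
proof -
  define x where "x = (B - s) / (2 * r)"
  have xpos: "x > 0" unfolding x_def using assms r by simp
  have "s + 2 * r * real k < B \<longleftrightarrow> real k < x"
    unfolding x_def using r by (simp add: pos_less_divide_eq algebra_simps)
  also have "\<dots> \<longleftrightarrow> int k < \<lceil>x\<rceil>" by (simp add: less_ceiling_iff)
  also have "\<dots> \<longleftrightarrow> k \<le> nn s"
  proof -
    have "\<lceil>x\<rceil> \<ge> 1" using xpos by (simp add: le_ceiling_iff)
    then show ?thesis unfolding nn_def x_def[symmetric] by linarith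
  qed
  finally show ?thesis .
qed

definition kof :: "real \<Rightarrow> nat" where "kof y = nat \<lceil>(y - A) / (2 * r)\<rceil>"

lemma kof_chain:
  assumes "A - 2 * r < s" "s \<le> A"
  shows "kof (s + 2 * r * real k) = k"
proof -
  have "\<lceil>(s + 2 * r * real k - A) / (2 * r)\<rceil> = int k"
  proof (rule ceiling_unique)
    have "(s + 2 * r * real k - A) / (2 * r) = real k + (s - A) / (2 * r)"
      using r by (simp add: field_simps)
    moreover have "(s - A) / (2 * r) \<le> 0" using assms r by (simp add: divide_nonpos_pos)
    moreover have "-1 < (s - A) / (2 * r)" using assms r by (simp add: less_divide_eq)
    ultimately show "real_of_int (int k) - 1 < (s + 2 * r * real k - A) / (2 * r)"
      "(s + 2 * r * real k - A) / (2 * r) \<le> real_of_int (int k)" by auto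
  qed
  then show ?thesis unfolding kof_def by simp
qed

lemma kof_pos:
  assumes "A < y"
  shows "A - 2 * r < y - 2 * r * real (kof y)" "y - 2 * r * real (kof y) \<le> A" "kof y \<ge> 1"
proof -
  define x where "x = (y - A) / (2 * r)"
  have xpos: "x > 0" unfolding x_def using assms r by simp
  have c: "real_of_int \<lceil>x\<rceil> - 1 < x" "x \<le> real_of_int \<lceil>x\<rceil>" using ceiling_correct[of x] by auto
  have "0 < real_of_int \<lceil>x\<rceil>" using c(2) xpos by linarith
  then have c0: "0 < \<lceil>x\<rceil>" by simp
  have k: "real (kof y) = real_of_int \<lceil>x\<rceil>" unfolding kof_def x_def[symmetric] using c0 by simp
  have e: "y - A = 2 * r * x" unfolding x_def using r by simp
  have "2 * r * (real_of_int \<lceil>x\<rceil> - 1) < 2 * r * x" using c(1) r by (intro mult_strict_left_mono) auto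
  then show "A - 2 * r < y - 2 * r * real (kof y)" unfolding k using e by (simp add: algebra_simps)
  show "y - 2 * r * real (kof y) \<le> A" unfolding k using c(2) e r
    by (simp add: algebra_simps mult_left_mono)
  show "kof y \<ge> 1" unfolding kof_def x_def[symmetric] using c0 by (metis One_nat_def Suc_leI zero_less_nat_eq)
qed

lemma kof_le: "y \<le> A \<Longrightarrow> kof y = 0"
  unfolding kof_def using r by (simp add: ceiling_le_iff divide_nonpos_pos)

lemma kof_mono: "y \<le> y' \<Longrightarrow> kof y \<le> kof y'"
  unfolding kof_def using r by (intro nat_mono ceiling_mono divide_right_mono) auto

definition u :: "real \<Rightarrow> real" where
  "u y = gm cc W (nn (y - 2 * r * real (kof y))) (kof y)"

lemma gm_facts:
  "-1 \<le> gm cc W n k" "gm cc W n k \<le> 1" "gm cc W n 0 = -1"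
  using gm_range[OF Wc less_imp_le[OF cc_pos] W1 Wm1] gm_0[OF Wc less_imp_le[OF cc_pos] W1 Wm1] by auto

lemma gm_big: "k > n \<Longrightarrow> gm cc W n k = 1"
  using gm(1)[OF Wc less_imp_le[OF cc_pos], of n] by (auto simp: Dset_def)

lemma u_chain:
  assumes "A - 2 * r < s" "s \<le> A"
  shows "u (s + 2 * r * real k) = gm cc W (nn s) k"
  unfolding u_def kof_chain[OF assms] by simp

lemma u_le_A: "y \<le> A \<Longrightarrow> u y = -1"
  unfolding u_def kof_le by (simp add: kof_le gm_facts)

lemma u_ge_B:
  assumes "B \<le> y" shows "u y = 1"
proof -
  have Ay: "A < y" using assms AB by simp
  define s where "s = y - 2 * r * real (kof y)"
  have s: "A - 2 * r < s" "s \<le> A" using kof_pos[OF Ay] unfolding s_def by auto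
  have "y = s + 2 * r * real (kof y)" unfolding s_def by simp
  then have "\<not> kof y \<le> nn s" using nn_iff[of s "kof y"] s AB assms by auto
  then show ?thesis unfolding u_def s_def[symmetric] by (simp add: gm_big)
qed

lemma u_range: "\<bar>u y\<bar> \<le> 1"
  unfolding u_def using gm_facts by (simp add: abs_le_iff)

lemma nn_antimono: "s \<le> s' \<Longrightarrow> nn s' \<le> nn s"
  unfolding nn_def using r by (intro diff_le_mono nat_mono ceiling_mono divide_right_mono) auto

lemma nn_close:
  assumes "s < s' + 2 * r"
  shows "nn s' \<le> Suc (nn s)"
proof -
  have e: "(B - s') / (2 * r) = (B - s) / (2 * r) + (s - s') / (2 * r)" by (simp add: diff_divide_distrib)
  have "(s - s') / (2 * r) \<le> 1" using assms r by (simp add: pos_divide_le_eq)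
  then have "(B - s') / (2 * r) \<le> (B - s) / (2 * r) + 1" using e by linarith
  then have "\<lceil>(B - s') / (2 * r)\<rceil> \<le> \<lceil>(B - s) / (2 * r)\<rceil> + 1"
    by (metis ceiling_add_one ceiling_mono)
  then show ?thesis unfolding nn_def by linarith
qed

lemma u_mono: "mono u"
proof (rule monoI)
  fix y y' :: real assume yy: "y \<le> y'"
  show "u y \<le> u y'"
  proof (cases "y \<le> A")
    case True then show ?thesis using u_le_A[OF True] gm_facts unfolding u_def by simp
  next
    case False
    then have Ay: "A < y" and Ay': "A < y'" using yy by auto
    define k where "k = kof y" define k' where "k' = kof y'"
    define s where "s = y - 2 * r * real k" define s' where "s' = y' - 2 * r * real k'"
    have s: "A - 2 * r < s" "s \<le> A" using kof_pos[OF Ay] unfolding s_def k_def by auto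
    have s': "A - 2 * r < s'" "s' \<le> A" using kof_pos[OF Ay'] unfolding s'_def k'_def by auto
    have kk: "k \<le> k'" unfolding k_def k'_def using kof_mono[OF yy] .
    have uy: "u y = gm cc W (nn s) k" unfolding u_def s_def k_def ..
    have uy': "u y' = gm cc W (nn s') k'" unfolding u_def s'_def k'_def ..
    show ?thesis
    proof (cases "k = k'")
      case True
      then have "s \<le> s'" using yy unfolding s_def s'_def by simp
      then show ?thesis unfolding uy uy' True
        using gm_mono_n[OF Wc less_imp_le[OF cc_pos] W1 Wm1 nn_antimono] by blast
    next
      case False
      then have "k < k'" using kk by simp
      moreover have "nn s' \<le> Suc (nn s)" using s s' by (intro nn_close) simp
      ultimately show ?thesis unfolding uy uy'
        using gm_cross[OF Wc less_imp_le[OF cc_pos] W1 Wm1] by blast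
    qed
  qed
qed

lemma u_meas: "u \<in> borel_measurable lborel"
  using u_mono borel_measurable_mono by simp

lemma u_admissible: "admissible r R u"
  unfolding admissible_def Linf_def
  using u_meas u_range u_le_A u_ge_B unfolding A_def B_def by (auto intro!: exI[of _ 1])

end


lemma integrable_ind_bounded:
  fixes f :: "real \<Rightarrow> real"
  assumes f: "f \<in> borel_measurable lborel" and S: "S \<in> sets lborel" "emeasure lborel S < \<infinity>"
    and K: "AE x in lborel. \<bar>f x\<bar> \<le> K"
  shows "integrable lborel (\<lambda>x. indicator S x * f x)"
proof (rule Bochner_Integration.integrable_bound[where f="\<lambda>x. indicator S x * K"])
  show "integrable lborel (\<lambda>x. indicator S x * K)"
    by (rule integrable_mult_left) (use S in auto)
  show "(\<lambda>x. indicator S x * f x) \<in> borel_measurable lborel" using f S by measurable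
  show "AE x in lborel. norm (indicator S x * f x) \<le> norm (indicator S x * K)"
    using K by eventually_elim (auto simp: indicator_def)
qed

lemma W_bdd_on:
  assumes "continuous_on UNIV (W :: real \<Rightarrow> real)"
  shows "\<exists>K. \<forall>t. \<bar>t\<bar> \<le> C \<longrightarrow> \<bar>W t\<bar> \<le> K"
proof -
  have "compact (W ` {-C..C})" by (rule compact_continuous_image) (use assms continuous_on_subset in auto)
  then obtain K where K: "\<forall>x\<in>W ` {-C..C}. norm x \<le> K" using compact_imp_bounded bounded_iff by metis
  have "\<bar>W t\<bar> \<le> K" if "\<bar>t\<bar> \<le> C" for t
  proof -
    have "t \<in> {-C..C}" using that by auto
    then show ?thesis using K by auto
  qed
  then show ?thesis by blast
qed

context setting
begin

lemma W_meas: "W \<in> borel_measurable borel"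
  by (rule borel_measurable_continuous_onI[OF Wc])

definition good :: "(real \<Rightarrow> real) \<Rightarrow> bool" where
  "good w \<longleftrightarrow> w \<in> borel_measurable lborel \<and> (\<forall>y. \<bar>w y\<bar> \<le> 1)
     \<and> (AE x in lborel. x \<le> A \<longrightarrow> w x = -1) \<and> (AE x in lborel. B \<le> x \<longrightarrow> w x = 1)"

definition h :: "(real \<Rightarrow> real) \<Rightarrow> real \<Rightarrow> real" where
  "h w y = cc * (indicator {A - 2 * r<..<B} y * (w (y + 2 * r) - w y)\<^sup>2) + indicator {A<..<B} y * W (w y)"

definition "MM = nat \<lceil>(B - A) / (2 * r)\<rceil> + 1"

definition Psi :: "(real \<Rightarrow> real) \<Rightarrow> real \<Rightarrow> real" where
  "Psi w s = indicator {A - 2 * r<..A} s * (\<Sum>k\<le>MM. h w (s + 2 * r * real k))"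

definition Lw :: "(real \<Rightarrow> real) \<Rightarrow> real" where
  "Lw w = cc * (LINT x:{-R<..<R}|lborel. (w (x + r) - w (x - r))\<^sup>2) + (LINT x:{-R<..<R}|lborel. W (w x))"

lemma KW: "\<exists>KW. \<forall>t. \<bar>t\<bar> \<le> 1 \<longrightarrow> \<bar>W t\<bar> \<le> KW"
  using W_bdd_on[OF Wc, of 1] by blast

lemma meas_shift:
  assumes "w \<in> borel_measurable lborel"
  shows "(\<lambda>y. w (y + c)) \<in> borel_measurable lborel"
proof -
  have [measurable]: "w \<in> borel_measurable borel" using assms by (simp add: measurable_lborel2)
  have "(\<lambda>y. w (y + c)) \<in> borel_measurable borel" by measurable
  then show ?thesis by (simp only: measurable_lborel2)
qed

lemma h_meas:
  assumes "w \<in> borel_measurable lborel"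
  shows "h w \<in> borel_measurable lborel"
proof -
  have [measurable]: "w \<in> borel_measurable borel" using assms by (simp add: measurable_lborel2)
  have [measurable]: "W \<in> borel_measurable borel" by (rule W_meas)
  have "h w \<in> borel_measurable borel" unfolding h_def by measurable
  then show ?thesis by (simp only: measurable_lborel2)
qed

lemma h_bound:
  assumes "\<And>y. \<bar>w y\<bar> \<le> 1"
  shows "\<exists>K. \<forall>y. \<bar>h w y\<bar> \<le> K"
proof -
  obtain KW where KW': "\<forall>t. \<bar>t\<bar> \<le> 1 \<longrightarrow> \<bar>W t\<bar> \<le> KW" using KW by blast
  have KW: "\<bar>W t\<bar> \<le> KW" if "\<bar>t\<bar> \<le> 1" for t using KW' that by blast
  have hb: "\<bar>h w y\<bar> \<le> cc * 4 + \<bar>KW\<bar>" for y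
  proof -
    have d: "(w (y + 2 * r) - w y)\<^sup>2 \<le> 4"
    proof -
      have "\<bar>w (y + 2 * r) - w y\<bar> \<le> 2" using assms[of y] assms[of "y + 2 * r"] by linarith
      then have "\<bar>w (y + 2 * r) - w y\<bar>\<^sup>2 \<le> 2\<^sup>2" by (intro power_mono) auto
      then show ?thesis by simp
    qed
    have i1: "\<bar>indicator {A - 2 * r<..<B} y * (w (y + 2 * r) - w y)\<^sup>2\<bar> \<le> 4"
      using d by (auto simp: indicator_def)
    have i2: "\<bar>indicator {A<..<B} y * W (w y)\<bar> \<le> \<bar>KW\<bar>"
      using KW[OF assms[of y]] by (auto simp: indicator_def)
    have "\<bar>cc * (indicator {A - 2 * r<..<B} y * (w (y + 2 * r) - w y)\<^sup>2)\<bar> \<le> cc * 4"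
      using i1 cc_pos by (simp add: abs_mult)
    then show ?thesis unfolding h_def using i2 abs_triangle_ineq[of "cc * (indicator {A - 2 * r<..<B} y * (w (y + 2 * r) - w y)\<^sup>2)" "indicator {A<..<B} y * W (w y)"] by linarith
  qed
  show ?thesis using hb by blast
qed

lemma int_piece:
  assumes w: "w \<in> borel_measurable lborel" "\<And>y. \<bar>w y\<bar> \<le> 1"
    and S: "S \<in> sets lborel" "emeasure lborel S < \<infinity>"
  shows "integrable lborel (\<lambda>y. indicator S y * h w (y + c))"
proof -
  obtain K where K': "\<forall>y. \<bar>h w y\<bar> \<le> K" using h_bound[of w, OF w(2)] by blast
  have K: "\<bar>h w y\<bar> \<le> K" for y using K' by blast
  show ?thesis
    by (rule integrable_ind_bounded[OF meas_shift[OF h_meas[OF w(1)]] S]) (rule AE_I2, rule K)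
qed

end


lemma trans_int: "integral\<^sup>L lborel f = integral\<^sup>L lborel (\<lambda>x. f (t + x :: real) :: real)"
  using lborel_integral_real_affine[of 1 f t] by simp

context setting
begin

lemma L_part1:
  fixes w :: "real \<Rightarrow> real"
  shows "(LINT x:{-R<..<R}|lborel. (w (x + r) - w (x - r))\<^sup>2) =
   integral\<^sup>L lborel (\<lambda>y. indicator {A - 2 * r<..<B} y * (w (y + 2 * r) - w y)\<^sup>2)"
proof -
  have "integral\<^sup>L lborel (\<lambda>y. indicator {A - 2 * r<..<B} y * (w (y + 2 * r) - w y)\<^sup>2)
    = integral\<^sup>L lborel (\<lambda>x. indicator {A - 2 * r<..<B} (-r + x) * (w (-r + x + 2 * r) - w (-r + x))\<^sup>2)"
    by (rule trans_int[of "\<lambda>y. indicator {A - 2 * r<..<B} y * (w (y + 2 * r) - w y)\<^sup>2" "-r"])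
  also have "\<dots> = (LINT x:{-R<..<R}|lborel. (w (x + r) - w (x - r))\<^sup>2)"
    unfolding set_lebesgue_integral_def
  proof (intro Bochner_Integration.integral_cong refl)
    fix x
    have e1: "-r + x + 2 * r = x + r" "-r + x = x - r" by simp_all
    have e2: "indicator {A - 2 * r<..<B} (x - r) = (indicator {-R<..<R} x :: real)"
      unfolding A_def B_def by (auto simp: indicator_def)
    show "indicator {A - 2 * r<..<B} (-r + x) * (w (-r + x + 2 * r) - w (-r + x))\<^sup>2 =
        indicator {-R<..<R} x *\<^sub>R (w (x + r) - w (x - r))\<^sup>2"
      unfolding e1 e2 by (simp add: add.commute)
  qed
  finally show ?thesis by simp
qed

lemma good_W_meas:
  assumes "w \<in> borel_measurable lborel"
  shows "(\<lambda>x. W (w x)) \<in> borel_measurable lborel"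
  using measurable_compose[OF assms W_meas] .

lemma L_part2:
  assumes g: "good w"
  shows "(LINT x:{-R<..<R}|lborel. W (w x)) = integral\<^sup>L lborel (\<lambda>y. indicator {A<..<B} y * W (w y))"
  unfolding set_lebesgue_integral_def
proof (rule integral_cong_AE)
  have wm: "w \<in> borel_measurable lborel" using g by (simp add: good_def)
  note Wm = good_W_meas[OF wm]
  show "(\<lambda>x. indicator {-R<..<R} x *\<^sub>R W (w x)) \<in> borel_measurable lborel" using Wm by measurable
  show "(\<lambda>y. indicator {A<..<B} y * W (w y)) \<in> borel_measurable lborel" using Wm by measurable
  have a1: "AE x in lborel. x \<le> A \<longrightarrow> w x = -1" and a2: "AE x in lborel. B \<le> x \<longrightarrow> w x = 1"
    using g by (auto simp: good_def)
  show "AE x in lborel. indicator {-R<..<R} x *\<^sub>R W (w x) = indicator {A<..<B} x * W (w x)"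
    using a1 a2
  proof eventually_elim
    case (elim x)
    show ?case
    proof (cases "A < x \<and> x < B")
      case True
      then have "x \<in> {-R<..<R}" using r unfolding A_def B_def by auto
      then show ?thesis using True by (simp add: indicator_def)
    next
      case False
      then have "W (w x) = 0 \<or> x \<notin> {-R<..<R}" using elim W1 Wm1 by (auto simp: not_less)
      then show ?thesis using False by (auto simp: indicator_def)
    qed
  qed
qed

lemma good_int1:
  assumes g: "good w" and S: "S \<in> sets lborel" "emeasure lborel S < \<infinity>"
  shows "integrable lborel (\<lambda>y. indicator S y * (w (y + 2 * r) - w y)\<^sup>2)"
proof (rule integrable_ind_bounded[OF _ S, where K=4])
  have wm: "w \<in> borel_measurable lborel" and b: "\<And>y. \<bar>w y\<bar> \<le> 1" using g by (auto simp: good_def)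
  show "(\<lambda>y. (w (y + 2 * r) - w y)\<^sup>2) \<in> borel_measurable lborel" using meas_shift[OF wm] wm by measurable
  show "AE x in lborel. \<bar>(w (x + 2 * r) - w x)\<^sup>2\<bar> \<le> 4"
  proof (rule AE_I2)
    fix x
    have "\<bar>w (x + 2 * r) - w x\<bar> \<le> 2" using b[of x] b[of "x + 2 * r"] by linarith
    then have "\<bar>w (x + 2 * r) - w x\<bar>\<^sup>2 \<le> 2\<^sup>2" by (intro power_mono) auto
    then show "\<bar>(w (x + 2 * r) - w x)\<^sup>2\<bar> \<le> 4" by simp
  qed
qed

lemma good_int2:
  assumes g: "good w" and S: "S \<in> sets lborel" "emeasure lborel S < \<infinity>"
  shows "integrable lborel (\<lambda>y. indicator S y * W (w y))"
proof -
  have wm: "w \<in> borel_measurable lborel" and b: "\<And>y. \<bar>w y\<bar> \<le> 1" using g by (auto simp: good_def)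
  obtain KW where KW: "\<forall>t. \<bar>t\<bar> \<le> 1 \<longrightarrow> \<bar>W t\<bar> \<le> KW" using KW by blast
  show ?thesis
    by (rule integrable_ind_bounded[OF good_W_meas[OF wm] S, where K=KW]) (use KW b in auto)
qed

lemma Lw_h:
  assumes g: "good w"
  shows "Lw w = integral\<^sup>L lborel (h w)"
proof -
  have i1: "integrable lborel (\<lambda>y. indicator {A - 2 * r<..<B} y * (w (y + 2 * r) - w y)\<^sup>2)"
    by (rule good_int1[OF g]) (use AB r in \<open>auto simp: emeasure_lborel_Ioo\<close>)
  have i2: "integrable lborel (\<lambda>y. indicator {A<..<B} y * W (w y))"
    by (rule good_int2[OF g]) (use AB r in \<open>auto simp: emeasure_lborel_Ioo\<close>)
  have "integral\<^sup>L lborel (h w) = integral\<^sup>L lborel (\<lambda>y. cc * (indicator {A - 2 * r<..<B} y * (w (y + 2 * r) - w y)\<^sup>2))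
      + integral\<^sup>L lborel (\<lambda>y. indicator {A<..<B} y * W (w y))"
    unfolding h_def by (rule Bochner_Integration.integral_add) (use i1 i2 in auto)
  also have "\<dots> = Lw w" unfolding Lw_def L_part1 L_part2[OF g] by simp
  finally show ?thesis by simp
qed

end


context setting
begin

lemma I_iff:
  assumes "A - 2 * r < y"
  shows "y \<in> {A - 2 * r + 2 * r * real k<..A + 2 * r * real k} \<longleftrightarrow> k = kof y"
proof -
  define x where "x = (y - A) / (2 * r)"
  have r2: "0 < 2 * r" using r by simp
  have "y \<in> {A - 2 * r + 2 * r * real k<..A + 2 * r * real k} \<longleftrightarrow> (real k - 1) * (2 * r) < y - A \<and> y - A \<le> real k * (2 * r)"
    by (auto simp: algebra_simps)
  also have "\<dots> \<longleftrightarrow> real k - 1 < x \<and> x \<le> real k"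
    unfolding x_def using pos_less_divide_eq[OF r2] pos_divide_le_eq[OF r2] by auto
  also have "\<dots> \<longleftrightarrow> \<lceil>x\<rceil> = int k" by (simp add: ceiling_eq_iff)
  also have "\<dots> \<longleftrightarrow> k = kof y"
  proof -
    have "-1 < x" unfolding x_def using assms r2 pos_less_divide_eq[OF r2, of "-1"] by auto
    then have "0 \<le> \<lceil>x\<rceil>" by (simp add: le_ceiling_iff)
    then show ?thesis unfolding kof_def x_def[symmetric] by auto
  qed
  finally show ?thesis .
qed

lemma kof_le_MM:
  assumes "y < B" shows "kof y \<le> MM"
proof -
  have "(y - A) / (2 * r) \<le> (B - A) / (2 * r)" using assms r by (simp add: divide_right_mono)
  then have "\<lceil>(y - A) / (2 * r)\<rceil> \<le> \<lceil>(B - A) / (2 * r)\<rceil>" by (rule ceiling_mono)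
  then show ?thesis unfolding kof_def MM_def by linarith
qed

lemma part_ind:
  assumes "A - 2 * r < y" "y < B"
  shows "(\<Sum>k\<le>MM. indicator {A - 2 * r + 2 * r * real k<..A + 2 * r * real k} y) = (1::real)"
proof -
  have "(\<Sum>k\<le>MM. indicator {A - 2 * r + 2 * r * real k<..A + 2 * r * real k} y) =
        (\<Sum>k\<le>MM. if k = kof y then 1 else (0::real))"
  proof (intro sum.cong refl)
    fix k
    show "indicator {A - 2 * r + 2 * r * real k<..A + 2 * r * real k} y = (if k = kof y then 1 else (0::real))"
      using I_iff[OF assms(1), of k] by (cases "k = kof y") (auto simp: indicator_def)
  qed
  also have "\<dots> = 1" using kof_le_MM[OF assms(2)] by simp
  finally show ?thesis .
qed

lemma h_partition:
  "h w y = (\<Sum>k\<le>MM. indicator {A - 2 * r + 2 * r * real k<..A + 2 * r * real k} y * h w y)"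
proof (cases "A - 2 * r < y \<and> y < B")
  case True
  then show ?thesis using part_ind[of y] by (simp add: sum_distrib_right[symmetric])
next
  case False
  then have "h w y = 0" unfolding h_def using AB r by (auto simp: indicator_def)
  then show ?thesis by simp
qed

lemma Ioc_fin: "emeasure lborel {a<..b::real} < \<infinity>"
  by (cases "a \<le> b") (auto simp: emeasure_lborel_Ioc)

lemma hPsi:
  assumes g: "good w"
  shows "integral\<^sup>L lborel (h w) = integral\<^sup>L lborel (Psi w)"
proof -
  have wm: "w \<in> borel_measurable lborel" and b: "\<And>y. \<bar>w y\<bar> \<le> 1" using g by (auto simp: good_def)
  define I where "I = (\<lambda>k::nat. {A - 2 * r + 2 * r * real k<..A + 2 * r * real k})"
  have int1: "integrable lborel (\<lambda>y. indicator (I k) y * h w y)" for k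
    using int_piece[OF wm b, of "I k" 0] Ioc_fin unfolding I_def by simp
  have int2: "integrable lborel (\<lambda>s. indicator {A - 2 * r<..A} s * h w (s + 2 * r * real k))" for k
    using int_piece[OF wm b, of "{A - 2 * r<..A}" "2 * r * real k"] Ioc_fin by simp
  have "integral\<^sup>L lborel (h w) = integral\<^sup>L lborel (\<lambda>y. \<Sum>k\<le>MM. indicator (I k) y * h w y)"
    unfolding I_def by (rule Bochner_Integration.integral_cong[OF refl], rule h_partition)
  also have "\<dots> = (\<Sum>k\<le>MM. integral\<^sup>L lborel (\<lambda>y. indicator (I k) y * h w y))"
    by (rule Bochner_Integration.integral_sum) (rule int1)
  also have "\<dots> = (\<Sum>k\<le>MM. integral\<^sup>L lborel (\<lambda>s. indicator {A - 2 * r<..A} s * h w (s + 2 * r * real k)))"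
  proof (intro sum.cong refl)
    fix k
    have "integral\<^sup>L lborel (\<lambda>y. indicator (I k) y * h w y) =
          integral\<^sup>L lborel (\<lambda>s. indicator (I k) (2 * r * real k + s) * h w (2 * r * real k + s))"
      by (rule trans_int[of "\<lambda>y. indicator (I k) y * h w y" "2 * r * real k"])
    also have "\<dots> = integral\<^sup>L lborel (\<lambda>s. indicator {A - 2 * r<..A} s * h w (s + 2 * r * real k))"
    proof (intro Bochner_Integration.integral_cong refl)
      fix s
      have "indicator (I k) (2 * r * real k + s) = (indicator {A - 2 * r<..A} s :: real)"
        unfolding I_def by (auto simp: indicator_def)
      then show "indicator (I k) (2 * r * real k + s) * h w (2 * r * real k + s) =
                 indicator {A - 2 * r<..A} s * h w (s + 2 * r * real k)" by (simp add: add.commute)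
    qed
    finally show "integral\<^sup>L lborel (\<lambda>y. indicator (I k) y * h w y) =
          integral\<^sup>L lborel (\<lambda>s. indicator {A - 2 * r<..A} s * h w (s + 2 * r * real k))" .
  qed
  also have "\<dots> = integral\<^sup>L lborel (\<lambda>s. \<Sum>k\<le>MM. indicator {A - 2 * r<..A} s * h w (s + 2 * r * real k))"
    by (rule Bochner_Integration.integral_sum[symmetric]) (rule int2)
  also have "\<dots> = integral\<^sup>L lborel (Psi w)"
    unfolding Psi_def by (simp add: sum_distrib_left)
  finally show ?thesis .
qed

lemma Psi_int:
  assumes g: "good w"
  shows "integrable lborel (Psi w)"
proof -
  have wm: "w \<in> borel_measurable lborel" and b: "\<And>y. \<bar>w y\<bar> \<le> 1" using g by (auto simp: good_def)
  have "integrable lborel (\<lambda>s. \<Sum>k\<le>MM. indicator {A - 2 * r<..A} s * h w (s + 2 * r * real k))"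
    by (intro Bochner_Integration.integrable_sum) (use int_piece[OF wm b, of "{A - 2 * r<..A}"] Ioc_fin in simp)
  then show ?thesis unfolding Psi_def by (simp add: sum_distrib_left)
qed

end


context setting
begin

lemma nn_lt_MM:
  assumes "A - 2 * r < s" shows "nn s < MM"
proof -
  have e: "(B - s) / (2 * r) = (B - A) / (2 * r) + (A - s) / (2 * r)" by (simp add: diff_divide_distrib)
  have "(A - s) / (2 * r) < 1" using assms r by (simp add: pos_divide_less_eq)
  then have "(B - s) / (2 * r) \<le> (B - A) / (2 * r) + 1" using e by linarith
  then have "\<lceil>(B - s) / (2 * r)\<rceil> \<le> \<lceil>(B - A) / (2 * r)\<rceil> + 1"
    by (metis ceiling_add_one ceiling_mono)
  then show ?thesis unfolding nn_def MM_def by linarith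
qed

lemma sum_if_le:
  fixes n m :: nat
  assumes "n \<le> m"
  shows "(\<Sum>k\<le>m. if k \<le> n then f k else 0) = (\<Sum>k\<le>n. f k :: real)"
proof -
  have "(\<Sum>k\<le>m. if k \<le> n then f k else 0) = sum f {k \<in> {..m}. k \<le> n}"
    by (rule sum.inter_filter[symmetric]) simp
  also have "{k \<in> {..m}. k \<le> n} = {..n}" using assms by auto
  finally show ?thesis .
qed

lemma sum_if_le1:
  fixes n m :: nat
  assumes "n \<le> m"
  shows "(\<Sum>k\<le>m. if 1 \<le> k \<and> k \<le> n then f k else 0) = (\<Sum>k\<in>{1..n}. f k :: real)"
proof -
  have "(\<Sum>k\<le>m. if 1 \<le> k \<and> k \<le> n then f k else 0) = sum f {k \<in> {..m}. 1 \<le> k \<and> k \<le> n}"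
    by (rule sum.inter_filter[symmetric]) simp
  also have "{k \<in> {..m}. 1 \<le> k \<and> k \<le> n} = {1..n}" using assms by auto
  finally show ?thesis .
qed

lemma chain_sum:
  assumes s: "A - 2 * r < s" "s \<le> A" and ch: "\<And>k. k \<le> MM \<Longrightarrow> w (s + 2 * r * real k) = a k"
  shows "(\<Sum>k\<le>MM. h w (s + 2 * r * real k)) = Fd cc W (nn s) a"
proof -
  define n where "n = nn s"
  have nM: "n < MM" unfolding n_def using nn_lt_MM[OF s(1)] .
  have sB: "s < B" using s AB by simp
  have trm: "h w (s + 2 * r * real k) = cc * (if k \<le> n then (a (Suc k) - a k)\<^sup>2 else 0)
              + (if 1 \<le> k \<and> k \<le> n then W (a k) else 0)" if k: "k \<le> MM" for k
  proof -
    have "0 \<le> 2 * r * real k" using r by simp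
    then have p: "A - 2 * r < s + 2 * r * real k" using s by linarith
    have i1: "s + 2 * r * real k \<in> {A - 2 * r<..<B} \<longleftrightarrow> k \<le> n"
      using nn_iff[OF sB, of k] p unfolding n_def by auto
    have i2: "s + 2 * r * real k \<in> {A<..<B} \<longleftrightarrow> 1 \<le> k \<and> k \<le> n"
    proof -
      have "A < s + 2 * r * real k \<longleftrightarrow> 1 \<le> k"
      proof
        assume a: "A < s + 2 * r * real k" have "k \<noteq> 0"
        proof
          assume "k = 0" then show False using a s by simp
        qed
        then show "1 \<le> k" by simp
      next
        assume "1 \<le> k" then have "2 * r * 1 \<le> 2 * r * real k" using r by (intro mult_left_mono) auto
        then show "A < s + 2 * r * real k" using s by linarith
      qed
      then show ?thesis using nn_iff[OF sB, of k] unfolding n_def by auto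
    qed
    have e: "s + 2 * r * real k + 2 * r = s + 2 * r * real (Suc k)" by (simp add: algebra_simps)
    show ?thesis
    proof (cases "k \<le> n")
      case True
      then have sk: "Suc k \<le> MM" using nM by simp
      have ws: "w (s + 2 * r * real k + 2 * r) = a (Suc k)" unfolding e by (rule ch[OF sk])
      show ?thesis unfolding h_def ws using i1 i2 True ch[OF k] by (simp add: indicator_def)
    next
      case False
      then show ?thesis unfolding h_def using i1 i2 p by (simp add: indicator_def)
    qed
  qed
  have "(\<Sum>k\<le>MM. h w (s + 2 * r * real k)) = (\<Sum>k\<le>MM. cc * (if k \<le> n then (a (Suc k) - a k)\<^sup>2 else 0)
              + (if 1 \<le> k \<and> k \<le> n then W (a k) else 0))"
    by (intro sum.cong refl) (simp add: trm)
  also have "\<dots> = cc * (\<Sum>k\<le>MM. if k \<le> n then (a (Suc k) - a k)\<^sup>2 else 0) + (\<Sum>k\<le>MM. if 1 \<le> k \<and> k \<le> n then W (a k) else 0)"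
    by (simp add: sum.distrib sum_distrib_left)
  also have "\<dots> = Fd cc W n a" unfolding Fd_def
    using sum_if_le[OF less_imp_le[OF nM]] sum_if_le1[OF less_imp_le[OF nM]] by simp
  finally show ?thesis unfolding n_def .
qed

lemma good_u: "good u"
  unfolding good_def using u_meas u_range u_le_A u_ge_B by auto

lemma good_clp:
  assumes v: "admissible r R v"
  shows "good (\<lambda>y. clp (v y))"
proof -
  have vm: "v \<in> borel_measurable lborel" using v by (simp add: admissible_def Linf_def)
  have "(\<lambda>y. clp (v y)) \<in> borel_measurable lborel" using vm unfolding clp_def by measurable
  moreover have "AE x in lborel. x \<le> A \<longrightarrow> clp (v x) = -1"
  proof -
    have "AE x in lborel. x \<le> A \<longrightarrow> v x = -1" using v unfolding admissible_def A_def by auto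
    then show ?thesis by eventually_elim (auto simp: clp_def)
  qed
  moreover have "AE x in lborel. B \<le> x \<longrightarrow> clp (v x) = 1"
  proof -
    have "AE x in lborel. B \<le> x \<longrightarrow> v x = 1" using v unfolding admissible_def B_def by auto
    then show ?thesis by eventually_elim (auto simp: clp_def)
  qed
  ultimately show ?thesis unfolding good_def using clp_range by (auto simp: abs_le_iff)
qed

lemma Psi_le:
  assumes v: "admissible r R v"
  shows "AE s in lborel. Psi u s \<le> Psi (\<lambda>y. clp (v y)) s"
proof -
  have a1: "AE x in lborel. x \<le> A \<longrightarrow> v x = -1" and a2: "AE x in lborel. B \<le> x \<longrightarrow> v x = 1"
    using v unfolding admissible_def A_def B_def by auto
  have "AE s in lborel. \<forall>k\<in>{..MM}. (s + 2 * r * real k \<le> A \<longrightarrow> v (s + 2 * r * real k) = -1)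
           \<and> (B \<le> s + 2 * r * real k \<longrightarrow> v (s + 2 * r * real k) = 1)"
  proof (rule AE_finite_allI)
    fix k :: nat
    show "AE s in lborel. (s + 2 * r * real k \<le> A \<longrightarrow> v (s + 2 * r * real k) = -1)
           \<and> (B \<le> s + 2 * r * real k \<longrightarrow> v (s + 2 * r * real k) = 1)"
      using AE_translate[OF a1, of "2 * r * real k"] AE_translate[OF a2, of "2 * r * real k"]
      by eventually_elim auto
  qed simp
  then show ?thesis
  proof eventually_elim
    case (elim s)
    show ?case
    proof (cases "s \<in> {A - 2 * r<..A}")
      case False then show ?thesis unfolding Psi_def by simp
    next
      case True
      then have s: "A - 2 * r < s" "s \<le> A" by auto
      define n where "n = nn s"
      have nM: "n < MM" unfolding n_def using nn_lt_MM[OF s(1)] .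
      define a where "a = (\<lambda>k. if k \<le> MM then clp (v (s + 2 * r * real k)) else 1)"
      have aD: "a \<in> Dset n"
      proof -
        have "v s = -1" using elim[rule_format, of 0] s by simp
        then have "a 0 = -1" unfolding a_def by (auto simp: clp_def)
        moreover have "-1 \<le> a k \<and> a k \<le> 1" for k unfolding a_def using clp_range by auto
        moreover have "a k = 1" if "k > n" for k
        proof (cases "k \<le> MM")
          case True
          have "\<not> s + 2 * r * real k < B" using nn_iff[of s k] s AB that unfolding n_def by auto
          then show ?thesis using elim True unfolding a_def by (auto simp: clp_def)
        qed (simp add: a_def)
        ultimately show ?thesis unfolding Dset_def by auto
      qed
      have cs1: "(\<Sum>k\<le>MM. h (\<lambda>y. clp (v y)) (s + 2 * r * real k)) = Fd cc W n a"
        unfolding n_def by (rule chain_sum[OF s]) (simp add: a_def)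
      have cs2: "(\<Sum>k\<le>MM. h u (s + 2 * r * real k)) = Fd cc W n (gm cc W n)"
        unfolding n_def by (rule chain_sum[OF s]) (simp add: u_chain[OF s])
      have "Fd cc W n (gm cc W n) \<le> Fd cc W n a"
        by (rule gm(2)[OF Wc less_imp_le[OF cc_pos] aD])
      then show ?thesis unfolding Psi_def using cs1 cs2 True by simp
    qed
  qed
qed

lemma Lw_u_le:
  assumes v: "admissible r R v"
  shows "Lw u \<le> Lw (\<lambda>y. clp (v y))"
proof -
  have "Lw u = integral\<^sup>L lborel (Psi u)" using Lw_h[OF good_u] hPsi[OF good_u] by simp
  also have "\<dots> \<le> integral\<^sup>L lborel (Psi (\<lambda>y. clp (v y)))"
    by (rule integral_mono_AE[OF Psi_int[OF good_u] Psi_int[OF good_clp[OF v]] Psi_le[OF v]])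
  also have "\<dots> = Lw (\<lambda>y. clp (v y))" using Lw_h[OF good_clp[OF v]] hPsi[OF good_clp[OF v]] by simp
  finally show ?thesis .
qed

end


context setting
begin

lemma r2: "0 < 2 * r" using r by simp

lemma sq_le_4:
  assumes "\<bar>a\<bar> \<le> 1" "\<bar>b\<bar> \<le> (1::real)"
  shows "\<bar>(a - b)\<^sup>2\<bar> \<le> 4"
proof -
  have "\<bar>a - b\<bar> \<le> 2" using assms by linarith
  then have "\<bar>a - b\<bar>\<^sup>2 \<le> 2\<^sup>2" by (intro power_mono) auto
  then show ?thesis by simp
qed

lemma Ioo_sets: "{-R<..<R} \<in> sets lborel" "emeasure lborel {-R<..<R} < \<infinity>"
  using RR r by (auto simp: emeasure_lborel_Ioo)

lemma set_int_bounded: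
  fixes f :: "real \<Rightarrow> real"
  assumes "f \<in> borel_measurable lborel" "AE x in lborel. \<bar>f x\<bar> \<le> K"
  shows "set_integrable lborel {-R<..<R} f"
  unfolding set_integrable_def using integrable_ind_bounded[OF assms(1) Ioo_sets assms(2)] by simp

lemma diff_int:
  fixes w :: "real \<Rightarrow> real"
  assumes "w \<in> borel_measurable lborel" "\<And>y. \<bar>w y\<bar> \<le> 1"
  shows "set_integrable lborel {-R<..<R} (\<lambda>x. (w (x + r) - w (x - r))\<^sup>2)"
proof (rule set_int_bounded)
  show "(\<lambda>x. (w (x + r) - w (x - r))\<^sup>2) \<in> borel_measurable lborel"
    using meas_shift[OF assms(1), of r] meas_shift[OF assms(1), of "-r"] by simp
  show "AE x in lborel. \<bar>(w (x + r) - w (x - r))\<^sup>2\<bar> \<le> 4"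
    by (rule AE_I2) (rule sq_le_4[OF assms(2) assms(2)])
qed

lemma osc_int:
  assumes vm: "v \<in> borel_measurable lborel" and C: "AE y in lborel. \<bar>v y\<bar> \<le> C"
  shows "set_integrable lborel {-R<..<R} (\<lambda>x. (osc_on (x - r) (x + r) v)\<^sup>2)"
proof (rule set_int_bounded)
  show "(\<lambda>x. (osc_on (x - r) (x + r) v)\<^sup>2) \<in> borel_measurable lborel"
    using osc_window_meas[OF vm r] by simp
  show "AE x in lborel. \<bar>(osc_on (x - r) (x + r) v)\<^sup>2\<bar> \<le> (2 * C)\<^sup>2"
  proof (rule AE_I2)
    fix x
    have "x - r < x + r" using r by simp
    note f = osc_facts[OF vm this C]
    have "(osc_on (x - r) (x + r) v)\<^sup>2 \<le> (2 * C)\<^sup>2" using f(4,5) by (intro power_mono) auto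
    then show "\<bar>(osc_on (x - r) (x + r) v)\<^sup>2\<bar> \<le> (2 * C)\<^sup>2" by simp
  qed
qed

lemma energy_u_le: "energy r W (-R) R u \<le> Lw u"
proof -
  have le: "(LINT x:{-R<..<R}|lborel. (osc_on (x - r) (x + r) u)\<^sup>2) \<le> (LINT x:{-R<..<R}|lborel. (u (x + r) - u (x - r))\<^sup>2)"
  proof (rule set_integral_mono)
    show "set_integrable lborel {-R<..<R} (\<lambda>x. (osc_on (x - r) (x + r) u)\<^sup>2)"
      by (rule osc_int[OF u_meas, of 1]) (use u_range in auto)
    show "set_integrable lborel {-R<..<R} (\<lambda>x. (u (x + r) - u (x - r))\<^sup>2)"
      by (rule diff_int[OF u_meas u_range])
    fix x
    have "x - r < x + r" using r by simp
    note o = osc_mono_fun[OF u_mono this u_range]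
    show "(osc_on (x - r) (x + r) u)\<^sup>2 \<le> (u (x + r) - u (x - r))\<^sup>2"
      using o by (intro power_mono) auto
  qed
  show ?thesis unfolding energy_def Lw_def cc_def using le mult_left_mono[OF le, of "1 / (2 * r\<^sup>2)"] by simp
qed

lemma approx_window:
  assumes vm: "v \<in> borel_measurable lborel"
  shows "AE x in lborel. ess_inf_on (x - r) (x + r) v \<le> ereal (v (x - r)) \<and> ereal (v (x - r)) \<le> ess_sup_on (x - r) (x + r) v
      \<and> ess_inf_on (x - r) (x + r) v \<le> ereal (v (x + r)) \<and> ereal (v (x + r)) \<le> ess_sup_on (x - r) (x + r) v"
proof -
  have R1: "AE p in lborel. ess_inf_on p (p + 2 * r) v \<le> ereal (v p) \<and> ereal (v p) \<le> ess_sup_on p (p + 2 * r) v"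
    by (rule approx_both[where l="\<lambda>p. p" and h="\<lambda>p. p + 2 * r", OF vm r2 null_right[OF r2]])
  have L1: "AE p in lborel. ess_inf_on (p - 2 * r) p v \<le> ereal (v p) \<and> ereal (v p) \<le> ess_sup_on (p - 2 * r) p v"
    by (rule approx_both[where l="\<lambda>p. p - 2 * r" and h="\<lambda>p. p", OF vm r2 null_left[OF r2]])
  show ?thesis using AE_translate[OF R1, of "-r"] AE_translate[OF L1, of r]
  proof eventually_elim
    case (elim x)
    have e: "x + - r + 2 * r = x + r" "x + - r = x - r" "x + r - 2 * r = x - r" by simp_all
    show ?case using elim unfolding e by (simp add: add.commute)
  qed
qed

lemma energy_ge:
  assumes v: "admissible r R v"
  shows "Lw (\<lambda>y. clp (v y)) \<le> energy r W (-R) R v"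
proof -
  have vm: "v \<in> borel_measurable lborel" using v by (simp add: admissible_def Linf_def)
  obtain C where C: "AE y in lborel. \<bar>v y\<bar> \<le> C" using v by (auto simp: admissible_def Linf_def)
  have cm: "(\<lambda>y. clp (v y)) \<in> borel_measurable lborel" using vm unfolding clp_def by measurable
  have cb: "\<And>y. \<bar>clp (v y)\<bar> \<le> 1" using clp_range by (simp add: abs_le_iff)
  have le1: "(LINT x:{-R<..<R}|lborel. (clp (v (x + r)) - clp (v (x - r)))\<^sup>2) \<le> (LINT x:{-R<..<R}|lborel. (osc_on (x - r) (x + r) v)\<^sup>2)"
  proof (rule set_integral_mono_AE)
    show "set_integrable lborel {-R<..<R} (\<lambda>x. (clp (v (x + r)) - clp (v (x - r)))\<^sup>2)"
      using diff_int[OF cm cb] by simp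
    show "set_integrable lborel {-R<..<R} (\<lambda>x. (osc_on (x - r) (x + r) v)\<^sup>2)"
      by (rule osc_int[OF vm C])
    show "AE x\<in>{-R<..<R} in lborel. (clp (v (x + r)) - clp (v (x - r)))\<^sup>2 \<le> (osc_on (x - r) (x + r) v)\<^sup>2"
      using approx_window[OF vm]
    proof eventually_elim
      case (elim x)
      have "x - r < x + r" using r by simp
      note f = osc_facts[OF vm this C]
      have "\<bar>v (x + r) - v (x - r)\<bar> \<le> osc_on (x - r) (x + r) v"
        using elim f(1,2,3) by (metis (no_types, opaque_lifting) abs_le_iff ereal_less_eq(3) diff_mono minus_diff_eq)
      then have "(v (x + r) - v (x - r))\<^sup>2 \<le> (osc_on (x - r) (x + r) v)\<^sup>2"
        by (metis abs_ge_zero power2_abs power_mono)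
      then show ?case using clp_sq[of "v (x + r)" "v (x - r)"] by simp
    qed
  qed
  have le2: "(LINT x:{-R<..<R}|lborel. W (clp (v x))) \<le> (LINT x:{-R<..<R}|lborel. W (v x))"
  proof (rule set_integral_mono)
    obtain KW where KW: "\<forall>t. \<bar>t\<bar> \<le> 1 \<longrightarrow> \<bar>W t\<bar> \<le> KW" using KW by blast
    show "set_integrable lborel {-R<..<R} (\<lambda>x. W (clp (v x)))"
      by (rule set_int_bounded[where K=KW]) (use good_W_meas[OF cm] KW cb in auto)
    obtain KC where KC: "\<forall>t. \<bar>t\<bar> \<le> C \<longrightarrow> \<bar>W t\<bar> \<le> KC" using W_bdd_on[OF Wc, of C] by blast
    show "set_integrable lborel {-R<..<R} (\<lambda>x. W (v x))"
      by (rule set_int_bounded[OF good_W_meas[OF vm], where K=KC]) (use C KC in \<open>auto elim!: eventually_mono\<close>)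
    fix x show "W (clp (v x)) \<le> W (v x)" by (rule W_clp[OF W1 Wm1 Wnn])
  qed
  have "cc * (LINT x:{-R<..<R}|lborel. (clp (v (x + r)) - clp (v (x - r)))\<^sup>2) \<le> cc * (LINT x:{-R<..<R}|lborel. (osc_on (x - r) (x + r) v)\<^sup>2)"
    using le1 cc_pos by (intro mult_left_mono) auto
  then show ?thesis unfolding Lw_def energy_def cc_def[symmetric] using le2 by simp
qed

end


context setting
begin

definition stp :: "real \<Rightarrow> real" where "stp y = (if y < 0 then -1 else 1)"

lemma stp_meas: "stp \<in> borel_measurable lborel"
proof -
  have "stp \<in> borel_measurable borel" unfolding stp_def by measurable
  then show ?thesis by (simp only: measurable_lborel2)
qed

lemma stp_adm: "admissible r R stp"
  unfolding admissible_def Linf_def using stp_meas RR r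
  by (auto simp: stp_def intro!: exI[of _ 1])

lemma clp_stp: "(\<lambda>y. clp (stp y)) = stp"
  by (auto simp: clp_def stp_def fun_eq_iff)

lemma Lw_stp: "Lw stp = 4 / r"
proof -
  have e1: "(LINT x:{-R<..<R}|lborel. (stp (x + r) - stp (x - r))\<^sup>2) = integral\<^sup>L lborel (\<lambda>x. 4 * indicator {-r..<r} x)"
    unfolding set_lebesgue_integral_def
  proof (intro Bochner_Integration.integral_cong refl)
    fix x
    show "indicator {-R<..<R} x *\<^sub>R (stp (x + r) - stp (x - r))\<^sup>2 = 4 * indicator {-r..<r} x"
      using RR r by (auto simp: stp_def indicator_def)
  qed
  have e2: "integral\<^sup>L lborel (\<lambda>x. 4 * indicator {-r..<r} x) = 4 * (2 * r)"
    using r by (simp add: measure_lborel_Ico)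
  have z: "W (stp x) = 0" for x using W1 Wm1 by (simp add: stp_def)
  have e3: "(LINT x:{-R<..<R}|lborel. W (stp x)) = 0"
    unfolding set_lebesgue_integral_def by (simp add: z)
  show ?thesis unfolding Lw_def e1 e2 e3 cc_def using r by (simp add: power2_eq_square)
qed

lemma clp_meas: "clp \<in> borel_measurable lborel"
proof -
  have "clp \<in> borel_measurable borel" unfolding clp_def by measurable
  then show ?thesis by (simp only: measurable_lborel2)
qed

lemma clp_adm: "admissible r R clp"
  unfolding admissible_def Linf_def using clp_meas RR r clp_range
  by (auto simp: clp_def intro!: exI[of _ 1])

lemma clp_clp: "(\<lambda>y. clp (clp y)) = clp"
  by (auto simp: clp_def fun_eq_iff)

lemma clp_mono: "x \<le> y \<Longrightarrow> clp x \<le> clp y" by (auto simp: clp_def)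

lemma Lw_clp: "Lw clp \<le> 4 + c_W W"
proof -
  define d where "d = (\<lambda>x. clp (x + r) - clp (x - r))"
  have d0: "0 \<le> d x" for x unfolding d_def using clp_mono[of "x - r" "x + r"] r by simp
  have d1: "d x \<le> 2 * r" for x unfolding d_def using clp_lip[of "x + r" "x - r"] r by simp
  have dm: "d \<in> borel_measurable lborel" unfolding d_def
    using borel_measurable_diff[OF meas_shift[OF clp_meas, of r] meas_shift[OF clp_meas, of "-r"]] by simp
  have db: "\<bar>d x\<bar> \<le> 2" for x unfolding d_def using clp_range[of "x + r"] clp_range[of "x - r"] by simp
  have iS: "integrable lborel (\<lambda>x. indicator S x * f x)" if "f \<in> borel_measurable lborel" "\<And>x. \<bar>f x\<bar> \<le> 1"
     "S \<in> sets lborel" "emeasure lborel S < \<infinity>" for S and f :: "real \<Rightarrow> real"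
    by (rule integrable_ind_bounded[OF that(1,3,4), where K=1]) (use that(2) in auto)
  define g1 where "g1 = (\<lambda>y. indicator {-R + r<..<R + r} y * clp y)"
  define g2 where "g2 = (\<lambda>y. indicator {-R - r<..<R - r} y * clp y)"
  have I1: "integral\<^sup>L lborel (\<lambda>x. indicator {-R<..<R} x * clp (x + r)) = integral\<^sup>L lborel g1"
  proof -
    have "integral\<^sup>L lborel g1 = integral\<^sup>L lborel (\<lambda>x. g1 (r + x))" by (rule trans_int)
    also have "\<dots> = integral\<^sup>L lborel (\<lambda>x. indicator {-R<..<R} x * clp (x + r))"
      by (intro Bochner_Integration.integral_cong refl) (auto simp: g1_def indicator_def add.commute)
    finally show ?thesis by simp
  qed
  have I2: "integral\<^sup>L lborel (\<lambda>x. indicator {-R<..<R} x * clp (x - r)) = integral\<^sup>L lborel g2"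
  proof -
    have "integral\<^sup>L lborel g2 = integral\<^sup>L lborel (\<lambda>x. g2 (-r + x))" by (rule trans_int)
    also have "\<dots> = integral\<^sup>L lborel (\<lambda>x. indicator {-R<..<R} x * clp (x - r))"
      by (intro Bochner_Integration.integral_cong refl) (auto simp: g2_def indicator_def)
    finally show ?thesis by simp
  qed
  have ig1: "integrable lborel g1" unfolding g1_def by (rule iS[OF clp_meas]) (use clp_range RR r in \<open>auto simp: abs_le_iff emeasure_lborel_Ioo\<close>)
  have ig2: "integrable lborel g2" unfolding g2_def by (rule iS[OF clp_meas]) (use clp_range RR r in \<open>auto simp: abs_le_iff emeasure_lborel_Ioo\<close>)
  have gdiff: "g1 y - g2 y = indicator {R - r..<R + r} y + indicator {-R - r<..-R + r} y" for y
  proof -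
    have "1 \<le> R - r" "-R + r \<le> -1" "-R + r < R - r" using RR r by auto
    then show ?thesis unfolding g1_def g2_def using r by (auto simp: indicator_def clp_def)
  qed
  have intd: "(LINT x:{-R<..<R}|lborel. d x) = 4 * r"
  proof -
    have "(LINT x:{-R<..<R}|lborel. d x) = integral\<^sup>L lborel (\<lambda>x. indicator {-R<..<R} x * clp (x + r) - indicator {-R<..<R} x * clp (x - r))"
      unfolding set_lebesgue_integral_def d_def by (simp add: algebra_simps)
    also have "\<dots> = integral\<^sup>L lborel g1 - integral\<^sup>L lborel g2"
      unfolding I1[symmetric] I2[symmetric]
      by (rule Bochner_Integration.integral_diff)
         (use iS[OF meas_shift[OF clp_meas], of "r"] iS[OF meas_shift[OF clp_meas], of "-r"] Ioo_sets clp_range in \<open>auto simp: abs_le_iff\<close>)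
    also have "\<dots> = integral\<^sup>L lborel (\<lambda>y. g1 y - g2 y)"
      by (rule Bochner_Integration.integral_diff[symmetric, OF ig1 ig2])
    also have "\<dots> = integral\<^sup>L lborel (\<lambda>y. indicator {R - r..<R + r} y + indicator {-R - r<..-R + r} y)"
      unfolding gdiff ..
    also have "\<dots> = 2 * r + 2 * r"
      using r by (subst Bochner_Integration.integral_add) (auto simp: emeasure_lborel_Ico emeasure_lborel_Ioc measure_lborel_Ico measure_lborel_Ioc)
    finally show ?thesis by simp
  qed
  have dsq: "(LINT x:{-R<..<R}|lborel. (d x)\<^sup>2) \<le> (LINT x:{-R<..<R}|lborel. 2 * r * d x)"
  proof (rule set_integral_mono)
    show "set_integrable lborel {-R<..<R} (\<lambda>x. (d x)\<^sup>2)"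
    proof (rule set_int_bounded[where K=4])
      show "(\<lambda>x. (d x)\<^sup>2) \<in> borel_measurable lborel" using dm by simp
      have "\<bar>(d x)\<^sup>2\<bar> \<le> 4" for x unfolding d_def by (rule sq_le_4) (use clp_range in \<open>auto simp: abs_le_iff\<close>)
      then show "AE x in lborel. \<bar>(d x)\<^sup>2\<bar> \<le> 4" by simp
    qed
    show "set_integrable lborel {-R<..<R} (\<lambda>x. 2 * r * d x)"
      by (rule set_int_bounded[where K="2 * r * 2"]) (use dm db r in \<open>auto intro!: AE_I2 simp: abs_mult\<close>)
    fix x show "(d x)\<^sup>2 \<le> 2 * r * d x" using d0[of x] d1[of x] by (simp add: power2_eq_square mult_right_mono)
  qed
  have "(LINT x:{-R<..<R}|lborel. 2 * r * d x) = 2 * r * (4 * r)"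
    using intd by (simp add: set_integral_mult_right)
  then have dsq': "cc * (LINT x:{-R<..<R}|lborel. (d x)\<^sup>2) \<le> 4"
    using dsq cc_pos mult_left_mono[OF dsq, of cc] unfolding cc_def using r by (simp add: power2_eq_square)
  have Wp: "(LINT x:{-R<..<R}|lborel. W (clp x)) = c_W W"
  proof -
    have "(LINT x:{-R<..<R}|lborel. W (clp x)) = (LINT x:{-1..1}|lborel. W x)"
      unfolding set_lebesgue_integral_def
    proof (intro Bochner_Integration.integral_cong refl)
      fix x
      have "1 < R" using RR r by simp
      then show "indicator {-R<..<R} x *\<^sub>R W (clp x) = indicator {-1..1} x *\<^sub>R W x"
        using W1 Wm1 by (auto simp: indicator_def clp_def)
    qed
    also have "\<dots> = integral {-1..1} W"
      by (rule set_borel_integral_eq_integral(2))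
         (unfold set_integrable_def, rule borel_integrable_compact, auto intro: continuous_on_subset[OF Wc])
    finally show ?thesis unfolding c_W_def .
  qed
  show ?thesis unfolding Lw_def Wp using dsq'[unfolded d_def] by simp
qed

end

theorem main_result:
  fixes r R :: real and W :: "real \<Rightarrow> real"
  assumes "r > 0" and "hyp_H W" and "R > 2 * r + 1"
  shows "\<exists>uR. admissible r R uR \<and> mono uR
           \<and> (\<forall>v. admissible r R v \<longrightarrow> energy r W (-R) R uR \<le> energy r W (-R) R v)
           \<and> energy r W (-R) R uR \<le> min (4 / r) (4 + c_W W)"
proof -
  interpret setting r R W using assms by unfold_locales
  show ?thesis
  proof (intro exI[of _ u] conjI allI impI)
    show "admissible r R u" by (rule u_admissible)
    show "mono u" by (rule u_mono)
    fix v assume v: "admissible r R v"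
    show "energy r W (-R) R u \<le> energy r W (-R) R v"
      using energy_u_le Lw_u_le[OF v] energy_ge[OF v] by linarith
  next
    have a: "energy r W (-R) R u \<le> 4 / r"
      using energy_u_le Lw_u_le[OF stp_adm] Lw_stp clp_stp by simp
    have b: "energy r W (-R) R u \<le> 4 + c_W W"
      using energy_u_le Lw_u_le[OF clp_adm] Lw_clp clp_clp by simp
    show "energy r W (-R) R u \<le> min (4 / r) (4 + c_W W)" using a b by simp
  qed
qed


theorem proposition2p2:
  fixes r R :: real and W :: "real \<Rightarrow> real"
  assumes "r > 0" and "hyp_H W" and "R > 2 * r + 1"
  shows "\<exists>uR. admissible r R uR \<and> mono uR
           \<and> (\<forall>v. admissible r R v \<longrightarrow> energy r W (-R) R uR \<le> energy r W (-R) R v)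
           \<and> energy r W (-R) R uR \<le> min (4 / r) (4 + c_W W)"
  using main_result[OF assms] .

end
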